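(* (Quantum Nash Equilibrium Theorem.) Every static quantum game, as defined in the context, has at least one Nash equilibrium: there exists a profile $\vec{\chi}=(\chi^1,\dots,\chi^N)\in\Omega_1\times\cdots\times\Omega_N$ such that for every player $k$ and every $\chi'\in\Omega_k$, $P_k(\vec{\chi}_{-k},\chi^k)\ge P_k(\vec{\chi}_{-k},\chi')$.
   Context: A static quantum game is defined as follows. There are $N$ players; each player receives $q$ qubits, and $n=2^q$. A referee prepares an initial state $\rho$, a density matrix on $(\mathbb{C}^n)^{\otimes N}$, sends the $k$-th $q$-qubit subsystem to player $k$; each player applies a trace-preserving completely positive map to their subsystem and returns it; the referee then measures with a POVM $\{M_m\}_{m=1}^L$ and awards player $k$ the amount $a^k_m\in\mathbb{R}$ on outcome $m$. Set $R^k=\sum_{m=1}^L a^k_m M_m^\dagger M_m$; player $k$'s payoff is $\mathrm{tr}(R^k\pi)$, where $\pi$ is the final state. Fix a basis $\{\tilde E_\alpha\}_{\alpha=1}^{4^q}$ of the space of $n\times n$ complex matrices. A trace-preserving completely positive map with Kraus operators $E_j=\sum_\alpha e_{j\alpha}\tilde E_\alpha$ is represented by its chi matrix $\chi_{\alpha\beta}=\sum_j e_{j\alpha}\overline{e_{j\beta}}$. Player $k$'s strategy set $\Omega_k$ is the set of all $4^q\times 4^q$ positive semidefinite Hermitian matrices $\chi$ satisfying $\sum_{\alpha,\beta}\overline{\chi_{\alpha\beta}}\,\tilde E_\alpha^\dagger\tilde E_\beta=I$ (i.e. chi matrices of all trace-preserving completely positive maps). For a profile $\vec\chi=(\chi^1,\dots,\chi^N)$,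 the payoff of player $k$ is $P_k(\vec\chi)=\sum \chi^1_{\alpha_1\beta_1}\cdots\chi^N_{\alpha_N\beta_N}A^k_{\alpha_1\beta_1\cdots\alpha_N\beta_N}$ (sum over all indices), where $A^k_{\alpha_1\beta_1\cdots\alpha_N\beta_N}=\mathrm{tr}\big[R^k(\tilde E_{\alpha_1}\otimes\cdots\otimes\tilde E_{\alpha_N})\rho(\tilde E_{\beta_1}^\dagger\otimes\cdots\otimes\tilde E_{\beta_N}^\dagger)\big]$; this equals $\mathrm{tr}(R^k\pi)$ and is real. Notation: $\vec\chi_{-k}$ denotes the profile with the $k$-th entry removed, and $(\vec\chi_{-k},\chi')$ the profile with the $k$-th entry replaced by $\chi'$. *)

theory Defs
  imports Complex_Main "Jordan_Normal_Form.Matrix"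
begin

(* All indices are 0-based: players k < N, outcomes m < L, basis indices alpha < 4^q. *)

definition adj :: "complex mat \<Rightarrow> complex mat" where
  "adj A = mat (dim_col A) (dim_row A) (\<lambda>(i,j). cnj (A $$ (j,i)))"

definition mtrace :: "complex mat \<Rightarrow> complex" where
  "mtrace A = (\<Sum>i<dim_row A. A $$ (i,i))"

definition hermitian :: "complex mat \<Rightarrow> bool" where
  "hermitian A \<longleftrightarrow> adj A = A"

definition psd :: "nat \<Rightarrow> complex mat \<Rightarrow> bool" where
  "psd d A \<longleftrightarrow> A \<in> carrier_mat d d \<and>
     (\<forall>x :: nat \<Rightarrow> complex. let s = (\<Sum>i<d. \<Sum>j<d. cnj (x i) * A $$ (i,j) * x j)
                                in s \<in> \<real> \<and> 0 \<le> Re s)"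

definition density_matrix :: "nat \<Rightarrow> complex mat \<Rightarrow> bool" where
  "density_matrix d \<rho> \<longleftrightarrow> psd d \<rho> \<and> mtrace \<rho> = 1"

(* digit of index i (0 \<le> i < n^N) belonging to subsystem k (k < N), subsystem 0 most significant *)
definition digit :: "nat \<Rightarrow> nat \<Rightarrow> nat \<Rightarrow> nat \<Rightarrow> nat" where
  "digit n N k i = (i div n ^ (N - 1 - k)) mod n"

definition tensor :: "nat \<Rightarrow> nat \<Rightarrow> (nat \<Rightarrow> complex mat) \<Rightarrow> complex mat" where
  "tensor n N X = mat (n ^ N) (n ^ N)
     (\<lambda>(i,j). \<Prod>k<N. X k $$ (digit n N k i, digit n N k j))"

definition povm :: "nat \<Rightarrow> nat \<Rightarrow> (nat \<Rightarrow> complex mat) \<Rightarrow> bool" where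
  "povm d L M \<longleftrightarrow> (\<forall>m<L. M m \<in> carrier_mat d d) \<and>
     mat d d (\<lambda>(i,j). \<Sum>m<L. (adj (M m) * M m) $$ (i,j)) = 1\<^sub>m d"

definition matrix_basis :: "nat \<Rightarrow> (nat \<Rightarrow> complex mat) \<Rightarrow> bool" where
  "matrix_basis n E \<longleftrightarrow> (\<forall>a<n^2. E a \<in> carrier_mat n n) \<and>
     (\<forall>c :: nat \<Rightarrow> complex.
        mat n n (\<lambda>(i,j). \<Sum>a<n^2. c a * E a $$ (i,j)) = 0\<^sub>m n n \<longrightarrow> (\<forall>a<n^2. c a = 0)) \<and>
     (\<forall>X \<in> carrier_mat n n. \<exists>c :: nat \<Rightarrow> complex.
        X = mat n n (\<lambda>(i,j). \<Sum>a<n^2. c a * E a $$ (i,j)))"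

definition payoff_op :: "nat \<Rightarrow> nat \<Rightarrow> (nat \<Rightarrow> complex mat) \<Rightarrow> (nat \<Rightarrow> nat \<Rightarrow> real) \<Rightarrow> nat \<Rightarrow> complex mat" where
  "payoff_op d L M a k = mat d d (\<lambda>(i,j). \<Sum>m<L. complex_of_real (a k m) * (adj (M m) * M m) $$ (i,j))"

(* strategy set Omega_k: chi matrices of all TPCP maps on q qubits w.r.t. basis E *)
definition strategies :: "nat \<Rightarrow> (nat \<Rightarrow> complex mat) \<Rightarrow> complex mat set" where
  "strategies q E = {\<chi>. \<chi> \<in> carrier_mat (4^q) (4^q) \<and> hermitian \<chi> \<and> psd (4^q) \<chi> \<and>
      mat (2^q) (2^q) (\<lambda>(i,j). \<Sum>\<alpha><4^q. \<Sum>\<beta><4^q. cnj (\<chi> $$ (\<alpha>,\<beta>)) * (adj (E \<alpha>) * E \<beta>) $$ (i,j))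
        = 1\<^sub>m (2^q)}"

definition coeffA :: "nat \<Rightarrow> nat \<Rightarrow> (nat \<Rightarrow> complex mat) \<Rightarrow> complex mat \<Rightarrow> nat \<Rightarrow> (nat \<Rightarrow> complex mat)
     \<Rightarrow> (nat \<Rightarrow> nat \<Rightarrow> real) \<Rightarrow> nat \<Rightarrow> (nat \<Rightarrow> nat) \<Rightarrow> (nat \<Rightarrow> nat) \<Rightarrow> complex" where
  "coeffA N q E \<rho> L M a k \<alpha> \<beta> =
     mtrace (payoff_op ((2^q)^N) L M a k * tensor (2^q) N (\<lambda>j. E (\<alpha> j)) * \<rho>
             * tensor (2^q) N (\<lambda>j. adj (E (\<beta> j))))"

(* P_k(chi_1,...,chi_N); the sum is real (as noted in the paper), we take its real part *)
definition payoff :: "nat \<Rightarrow> nat \<Rightarrow> (nat \<Rightarrow> complex mat) \<Rightarrow> complex mat \<Rightarrow> nat \<Rightarrow> (nat \<Rightarrow> complex mat)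
     \<Rightarrow> (nat \<Rightarrow> nat \<Rightarrow> real) \<Rightarrow> nat \<Rightarrow> (nat \<Rightarrow> complex mat) \<Rightarrow> real" where
  "payoff N q E \<rho> L M a k \<chi> = Re (\<Sum>\<alpha> \<in> PiE {..<N} (\<lambda>_. {..<4^q}). \<Sum>\<beta> \<in> PiE {..<N} (\<lambda>_. {..<4^q}).
      (\<Prod>j<N. \<chi> j $$ (\<alpha> j, \<beta> j)) * coeffA N q E \<rho> L M a k \<alpha> \<beta>)"

end

theory Submission
  imports "HOL-Homology.Homology" Defs "Jordan_Normal_Form.Determinant"
begin

no_notation vec_lambda (binder \<open>\<chi>\<close> 10)

definition nsq :: "nat \<Rightarrow> (nat \<Rightarrow> real) \<Rightarrow> real" where
  "nsq n x = (\<Sum>i\<le>n. (x i)^2)"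

definition Sph :: "nat \<Rightarrow> (nat \<Rightarrow> real) set" where
  "Sph n = {x. nsq n x = 1 \<and> (\<forall>i>n. x i = 0)}"

lemma Sph_not_contractible: "\<not> contractible (Sph n)"
proof -
  have "nsphere n = top_of_set (Sph n)"
    unfolding nsphere Sph_def nsq_def euclidean_product_topology by simp
  then show ?thesis using non_contractible_space_nsphere[of n] by simp
qed

lemma nsq_nonneg: "0 \<le> nsq n x"
  unfolding nsq_def by (simp add: sum_nonneg)

lemma nsq_scale: "nsq n (\<lambda>i. c * x i) = c^2 * nsq n x"
  unfolding nsq_def by (simp add: power_mult_distrib sum_distrib_left)

lemma nsq_zero_iff: "nsq n x = 0 \<longleftrightarrow> (\<forall>i\<le>n. x i = 0)"
  unfolding nsq_def by (subst sum_nonneg_eq_0_iff) auto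

lemma cont_coord: "continuous_on S g \<Longrightarrow> continuous_on S (\<lambda>x. g x i)"
  by (rule continuous_on_product_then_coordinatewise)

lemma cont_nsq: "continuous_on S w \<Longrightarrow> continuous_on S (\<lambda>p. nsq n (w p))"
  unfolding nsq_def by (intro continuous_intros; rule cont_coord; assumption)

lemma cont_snd_coord: "continuous_on S (\<lambda>p::'a::topological_space \<times> ('b \<Rightarrow> real). snd p i)"
  by (rule cont_coord, rule continuous_on_snd, rule continuous_on_id)

definition nrm :: "nat \<Rightarrow> (nat \<Rightarrow> real) \<Rightarrow> (nat \<Rightarrow> real)" where
  "nrm n w = (\<lambda>i. if i \<le> n then w i / sqrt (nsq n w) else 0)"

lemma nrm_Sph: assumes "nsq n w \<noteq> 0" shows "nrm n w \<in> Sph n"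
proof -
  have pos: "nsq n w > 0" using assms nsq_nonneg[of n w] by linarith
  define s where "s = sqrt (nsq n w)"
  have sq: "s^2 = nsq n w" using pos unfolding s_def by simp
  have e: "nrm n w = (\<lambda>i. if i \<le> n then w i / s else 0)" unfolding nrm_def s_def by simp
  have "nsq n (\<lambda>i. if i \<le> n then w i / s else 0) = (\<Sum>i\<le>n. (w i)^2 / s^2)"
    unfolding nsq_def by (simp add: power_divide)
  also have "\<dots> = nsq n w / s^2" by (simp add: sum_divide_distrib[symmetric] nsq_def)
  also have "\<dots> = 1" using pos sq by simp
  finally show ?thesis unfolding Sph_def e by auto
qed

lemma nrm_scale: assumes "x \<in> Sph n" "R > 0" shows "nrm n (\<lambda>i. R * x i) = x"
proof -
  have "nsq n (\<lambda>i. R * x i) = R^2" using assms by (simp add: nsq_scale Sph_def)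
  then have s: "sqrt (nsq n (\<lambda>i. R * x i)) = R" using assms by simp
  show ?thesis using assms unfolding nrm_def s by (auto simp: Sph_def fun_eq_iff)
qed

lemma cont_nrm: assumes "continuous_on S w" "\<And>p. p \<in> S \<Longrightarrow> nsq n (w p) \<noteq> 0"
  shows "continuous_on S (\<lambda>p. nrm n (w p))"
  unfolding nrm_def
proof (intro continuous_on_coordinatewise_then_product)
  fix i
  show "continuous_on S (\<lambda>p. if i \<le> n then w p i / sqrt (nsq n (w p)) else 0)"
  proof (cases "i \<le> n")
    case True
    have "continuous_on S (\<lambda>p. w p i / sqrt (nsq n (w p)))"
      using assms by (intro continuous_intros cont_nsq cont_coord[OF assms(1)]) auto
    then show ?thesis using True by simp
  qed simp
qed

lemma hom_of:
  fixes h :: "real \<times> 'a::topological_space \<Rightarrow> 'b::topological_space"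
  assumes "continuous_on ({0..1} \<times> S) h" "h ` ({0..1} \<times> S) \<subseteq> T"
  shows "homotopic_with_canon (\<lambda>_. True) S T (\<lambda>x. h (0,x)) (\<lambda>x. h (1,x))"
proof -
  have c: "continuous_map (prod_topology (top_of_set {0..1}) (top_of_set S)) (top_of_set T) h"
    using assms by auto
  show ?thesis unfolding homotopic_with_def
    apply (rule exI[where x=h])
    using c by simp
qed

lemma ball_brouwer:
  fixes f :: "(nat \<Rightarrow> real) \<Rightarrow> (nat \<Rightarrow> real)" and R :: real
  assumes R: "R > 0" and cf: "continuous_on {x. nsq n x \<le> R^2 \<and> (\<forall>i>n. x i = 0)} f"
    and fB: "f ` {x. nsq n x \<le> R^2 \<and> (\<forall>i>n. x i = 0)} \<subseteq> {x. nsq n x \<le> R^2 \<and> (\<forall>i>n. x i = 0)}"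
  shows "\<exists>x. nsq n x \<le> R^2 \<and> (\<forall>i>n. x i = 0) \<and> f x = x"
proof (rule ccontr)
  define B where "B = {x. nsq n x \<le> R^2 \<and> (\<forall>i>n. x i = 0)}"
  assume "\<not> ?thesis"
  then have nf: "\<And>x. x \<in> B \<Longrightarrow> f x \<noteq> x" unfolding B_def by auto
  have fB': "\<And>x. x \<in> B \<Longrightarrow> f x \<in> B" using fB unfolding B_def by auto
  have cf': "continuous_on B f" using cf unfolding B_def .
  define S where "S = Sph n"
  have scB: "(\<lambda>j. s * R * x j) \<in> B" if "x \<in> S" "s \<in> {0..1}" for x s
  proof -
    have "nsq n (\<lambda>j. s * R * x j) = (s * R)^2" using that nsq_scale[of n "s * R" x]
      by (simp add: S_def Sph_def)
    also have "\<dots> \<le> R^2" using that R by (simp add: power_mult_distrib mult_le_cancel_right1 power_le_one)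
    finally show ?thesis using that by (simp add: B_def S_def Sph_def)
  qed
  have RB: "(\<lambda>j. R * x j) \<in> B" if "x \<in> S" for x
    using scB[OF that, of 1] by simp
  define w1 where "w1 = (\<lambda>p::real \<times> (nat \<Rightarrow> real). \<lambda>i. R * snd p i - fst p * f (\<lambda>j. R * snd p j) i)"
  have cw1: "continuous_on ({0..1} \<times> S) w1"
  proof -
    have c1: "continuous_on ({0..1} \<times> S) (\<lambda>p::real \<times> (nat \<Rightarrow> real). (\<lambda>j. R * snd p j))"
      by (rule continuous_on_coordinatewise_then_product) (intro continuous_intros cont_snd_coord)
    have c2: "continuous_on ({0..1} \<times> S) (\<lambda>p::real \<times> (nat \<Rightarrow> real). f (\<lambda>j. R * snd p j))"
      by (rule continuous_on_compose2[OF cf' c1]) (auto intro: RB)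
    show ?thesis unfolding w1_def
      by (rule continuous_on_coordinatewise_then_product) (intro continuous_intros cont_snd_coord cont_coord[OF c2])
  qed
  have nz1: "nsq n (w1 p) \<noteq> 0" if pin: "p \<in> {0..1} \<times> S" for p
  proof
    assume z: "nsq n (w1 p) = 0"
    obtain t x where p: "p = (t,x)" and t: "t \<in> {0..1}" and x: "x \<in> S" using pin by auto
    let ?y = "\<lambda>j. R * x j"
    have eq: "\<And>i. i \<le> n \<Longrightarrow> R * x i = t * f ?y i" using z unfolding nsq_zero_iff w1_def p by auto
    have "R^2 = nsq n ?y" using x by (simp add: nsq_scale S_def Sph_def)
    also have "\<dots> = nsq n (\<lambda>i. t * f ?y i)" unfolding nsq_def using eq by simp
    also have "\<dots> = t^2 * nsq n (f ?y)" by (rule nsq_scale)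
    finally have e: "R^2 = t^2 * nsq n (f ?y)" .
    have nle: "nsq n (f ?y) \<le> R^2" using fB'[OF RB[OF x]] by (simp add: B_def)
    have "t^2 * nsq n (f ?y) \<le> t^2 * R^2" by (rule mult_left_mono[OF nle]) simp
    then have "R^2 \<le> t^2 * R^2" using e by simp
    then have "1 * R^2 \<le> t^2 * R^2" by simp
    then have "1 \<le> t^2" using R by (meson mult_right_le_imp_le zero_less_power)
    moreover have "t * t \<le> t" using t by (simp add: mult_left_le_one_le)
    ultimately have t1: "t = 1" using t by (simp add: power2_eq_square)
    have "f ?y = ?y"
    proof
      fix i show "f ?y i = ?y i"
      proof (cases "i \<le> n")
        case True then show ?thesis using eq[OF True] t1 by simp
      next
        case False
        then have "f ?y i = 0" using fB'[OF RB[OF x]] by (simp add: B_def)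
        moreover have "x i = 0" using x False by (simp add: S_def Sph_def)
        ultimately show ?thesis by simp
      qed
    qed
    then show False using nf[OF RB[OF x]] by simp
  qed
  define H1 where "H1 = (\<lambda>p. nrm n (w1 p))"
  have h1: "homotopic_with_canon (\<lambda>_. True) S S (\<lambda>x. H1 (0,x)) (\<lambda>x. H1 (1,x))"
  proof (rule hom_of)
    show "continuous_on ({0..1} \<times> S) H1" unfolding H1_def by (rule cont_nrm[OF cw1 nz1])
    show "H1 ` ({0..1} \<times> S) \<subseteq> S"
    proof (rule image_subsetI)
      fix p :: "real \<times> (nat \<Rightarrow> real)" assume "p \<in> {0..1} \<times> S"
      then have "nsq n (w1 p) \<noteq> 0" by (rule nz1)
      from nrm_Sph[OF this] show "H1 p \<in> S" unfolding H1_def S_def .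
    qed
  qed
  define w2 where "w2 = (\<lambda>p::real \<times> (nat \<Rightarrow> real). \<lambda>i. fst p * R * snd p i - f (\<lambda>j. fst p * R * snd p j) i)"
  have cw2: "continuous_on ({0..1} \<times> S) w2"
  proof -
    have c1: "continuous_on ({0..1} \<times> S) (\<lambda>p::real \<times> (nat \<Rightarrow> real). (\<lambda>j. fst p * R * snd p j))"
      by (rule continuous_on_coordinatewise_then_product) (intro continuous_intros cont_snd_coord)
    have c2: "continuous_on ({0..1} \<times> S) (\<lambda>p::real \<times> (nat \<Rightarrow> real). f (\<lambda>j. fst p * R * snd p j))"
      by (rule continuous_on_compose2[OF cf' c1]) (auto intro: scB)
    show ?thesis unfolding w2_def
      by (rule continuous_on_coordinatewise_then_product) (intro continuous_intros cont_snd_coord cont_coord[OF c2])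
  qed
  have nz2: "nsq n (w2 p) \<noteq> 0" if pin: "p \<in> {0..1} \<times> S" for p
  proof
    assume z: "nsq n (w2 p) = 0"
    obtain s x where p: "p = (s,x)" and s: "s \<in> {0..1}" and x: "x \<in> S" using pin by auto
    let ?y = "\<lambda>j. s * R * x j"
    have eq: "\<And>i. i \<le> n \<Longrightarrow> s * R * x i = f ?y i" using z unfolding nsq_zero_iff w2_def p by auto
    have "f ?y = ?y"
    proof
      fix i show "f ?y i = ?y i"
      proof (cases "i \<le> n")
        case True then show ?thesis using eq[OF True] by simp
      next
        case False
        then have "f ?y i = 0" using fB'[OF scB[OF x s]] by (simp add: B_def)
        moreover have "x i = 0" using x False by (simp add: S_def Sph_def)
        ultimately show ?thesis by simp
      qed
    qed
    then show False using nf[OF scB[OF x s]] by simp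
  qed
  define H2 where "H2 = (\<lambda>p. nrm n (w2 p))"
  have h2: "homotopic_with_canon (\<lambda>_. True) S S (\<lambda>x. H2 (0,x)) (\<lambda>x. H2 (1,x))"
  proof (rule hom_of)
    show "continuous_on ({0..1} \<times> S) H2" unfolding H2_def by (rule cont_nrm[OF cw2 nz2])
    show "H2 ` ({0..1} \<times> S) \<subseteq> S"
    proof (rule image_subsetI)
      fix p :: "real \<times> (nat \<Rightarrow> real)" assume "p \<in> {0..1} \<times> S"
      then have "nsq n (w2 p) \<noteq> 0" by (rule nz2)
      from nrm_Sph[OF this] show "H2 p \<in> S" unfolding H2_def S_def .
    qed
  qed
  have contH1: "continuous_on S (\<lambda>x. H1 (0,x))"
    using homotopic_with_imp_continuous[OF h1] by blast
  have e0: "homotopic_with_canon (\<lambda>_. True) S S id (\<lambda>x. H1 (0,x))"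
  proof (rule homotopic_with_equal)
    show "continuous_map (top_of_set S) (top_of_set S) id" by simp
    show "id x = H1 (0, x)" if "x \<in> topspace (top_of_set S)" for x
      using that nrm_scale[of x n R] R unfolding H1_def w1_def S_def by simp
  qed auto
  have e1: "homotopic_with_canon (\<lambda>_. True) S S (\<lambda>x. H1 (1,x)) (\<lambda>x. H2 (1,x))"
  proof (rule homotopic_with_equal)
    show "continuous_map (top_of_set S) (top_of_set S) (\<lambda>x. H1 (1,x))"
      using homotopic_with_imp_continuous_maps[OF h1] by blast
  qed (auto simp: H1_def H2_def w1_def w2_def)
  define c where "c = H2 (0, undefined)"
  have e2: "homotopic_with_canon (\<lambda>_. True) S S (\<lambda>x. H2 (0,x)) (\<lambda>x. c)"
  proof (rule homotopic_with_equal)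
    show "continuous_map (top_of_set S) (top_of_set S) (\<lambda>x. H2 (0,x))"
      using homotopic_with_imp_continuous_maps[OF h2] by blast
  qed (auto simp: c_def H2_def w2_def)
  have a1: "homotopic_with_canon (\<lambda>_. True) S S id (\<lambda>x. H1 (1,x))"
    by (rule homotopic_with_trans[OF e0 h1])
  have a2: "homotopic_with_canon (\<lambda>_. True) S S id (\<lambda>x. H2 (1,x))"
    by (rule homotopic_with_trans[OF a1 e1])
  have a3: "homotopic_with_canon (\<lambda>_. True) S S id (\<lambda>x. H2 (0,x))"
    by (rule homotopic_with_trans[OF a2 homotopic_with_symD[OF h2]])
  have a4: "homotopic_with_canon (\<lambda>_. True) S S id (\<lambda>x. c)"
    by (rule homotopic_with_trans[OF a3 e2])
  have "contractible S" unfolding contractible_def by (rule exI[of _ c]) (rule a4)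
  then show False using Sph_not_contractible unfolding S_def by blast
qed

definition SUP_I :: "'i set \<Rightarrow> ('i \<Rightarrow> real) set" where
  "SUP_I I = {x. \<forall>i. i \<notin> I \<longrightarrow> x i = 0}"

definition ip :: "'i set \<Rightarrow> ('i \<Rightarrow> real) \<Rightarrow> ('i \<Rightarrow> real) \<Rightarrow> real" where
  "ip I x y = (\<Sum>i\<in>I. x i * y i)"

definition cvx :: "('i \<Rightarrow> real) set \<Rightarrow> bool" where
  "cvx K \<longleftrightarrow> (\<forall>x\<in>K. \<forall>y\<in>K. \<forall>t::real. 0 \<le> t \<and> t \<le> 1 \<longrightarrow> (\<lambda>i. (1-t) * x i + t * y i) \<in> K)"

definition dst :: "'i set \<Rightarrow> ('i \<Rightarrow> real) \<Rightarrow> ('i \<Rightarrow> real) \<Rightarrow> real" where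
  "dst I v y = ip I (\<lambda>i. v i - y i) (\<lambda>i. v i - y i)"

definition proj :: "'i set \<Rightarrow> ('i \<Rightarrow> real) set \<Rightarrow> ('i \<Rightarrow> real) \<Rightarrow> ('i \<Rightarrow> real)" where
  "proj I K v = (SOME p. p \<in> K \<and> (\<forall>y\<in>K. dst I v p \<le> dst I v y))"

lemma cont_dst: "continuous_on S (\<lambda>y. dst I v y)"
  unfolding dst_def ip_def
  by (intro continuous_intros; rule cont_coord; rule continuous_on_id)

lemma proj_ex: assumes "compact K" "K \<noteq> {}"
  shows "proj I K v \<in> K \<and> (\<forall>y\<in>K. dst I v (proj I K v) \<le> dst I v y)"
proof -
  obtain p where "p \<in> K" "\<forall>y\<in>K. dst I v p \<le> dst I v y"
    using continuous_attains_inf[OF assms cont_dst] by blast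
  then show ?thesis unfolding proj_def by (rule someI[where x=p, OF conjI])
qed

lemma dst_expand: "dst I v (\<lambda>i. (1-t) * p i + t * y i) =
   dst I v p - 2 * t * ip I (\<lambda>i. v i - p i) (\<lambda>i. y i - p i) + t^2 * ip I (\<lambda>i. y i - p i) (\<lambda>i. y i - p i)"
proof -
  have "\<And>i. (v i - ((1-t) * p i + t * y i)) * (v i - ((1-t) * p i + t * y i)) =
        (v i - p i) * (v i - p i) - 2 * t * ((v i - p i) * (y i - p i)) + t^2 * ((y i - p i) * (y i - p i))"
    by (simp add: algebra_simps power2_eq_square)
  then show ?thesis unfolding dst_def ip_def
    by (simp add: sum.distrib sum_subtractf sum_distrib_left)
qed

lemma ip_self_nonneg: "finite I \<Longrightarrow> 0 \<le> ip I x x"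
  unfolding ip_def by (simp add: sum_nonneg)

lemma proj_var:
  assumes fin: "finite I" and K: "compact K" "K \<noteq> {}" "cvx K" and y: "y \<in> K"
  shows "ip I (\<lambda>i. v i - proj I K v i) (\<lambda>i. y i - proj I K v i) \<le> 0"
proof (rule ccontr)
  define p where "p = proj I K v"
  have pK: "p \<in> K" and pmin: "\<And>z. z \<in> K \<Longrightarrow> dst I v p \<le> dst I v z"
    using proj_ex[OF K(1,2), of I v] unfolding p_def by auto
  define a where "a = ip I (\<lambda>i. v i - p i) (\<lambda>i. y i - p i)"
  define b where "b = ip I (\<lambda>i. y i - p i) (\<lambda>i. y i - p i)"
  assume "\<not> ip I (\<lambda>i. v i - proj I K v i) (\<lambda>i. y i - proj I K v i) \<le> 0"
  then have apos: "a > 0" unfolding a_def p_def by simp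
  have b0: "b \<ge> 0" unfolding b_def by (rule ip_self_nonneg[OF fin])
  have key: "2 * t * a \<le> t^2 * b" if "0 \<le> t" "t \<le> 1" for t
  proof -
    have "(\<lambda>i. (1-t) * p i + t * y i) \<in> K" using K(3) pK y that unfolding cvx_def by blast
    from pmin[OF this] show ?thesis unfolding dst_expand a_def b_def by simp
  qed
  show False
  proof (cases "b \<le> a")
    case True
    from key[of 1] have "2 * a \<le> b" by simp
    then show False using True apos by simp
  next
    case False
    define t where "t = a / b"
    have bpos: "b > 0" using False apos by simp
    have t0: "0 < t" "t \<le> 1" using False apos bpos unfolding t_def by auto
    from key[of t] t0 have "2 * t * a \<le> t^2 * b" by simp
    also have "t^2 * b = t * a" unfolding t_def using bpos by (simp add: power2_eq_square)
    finally show False using t0 apos by (simp add: mult_le_cancel_left)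
  qed
qed

lemma proj_id:
  assumes fin: "finite I" and K: "compact K" "K \<noteq> {}" "K \<subseteq> SUP_I I" and y: "y \<in> K"
  shows "proj I K y = y"
proof -
  define p where "p = proj I K y"
  have pK: "p \<in> K" and pmin: "dst I y p \<le> dst I y y"
    using proj_ex[OF K(1,2), of I y] y unfolding p_def by auto
  have "dst I y p \<le> 0" using pmin by (simp add: dst_def ip_def)
  then have "(\<Sum>i\<in>I. (y i - p i) * (y i - p i)) = 0"
    using ip_self_nonneg[OF fin, of "\<lambda>i. y i - p i"] unfolding dst_def ip_def by linarith
  then have "\<forall>i\<in>I. (y i - p i) * (y i - p i) = 0"
    using fin by (subst (asm) sum_nonneg_eq_0_iff) auto
  then have "\<forall>i\<in>I. p i = y i" by auto
  moreover have "\<forall>i. i \<notin> I \<longrightarrow> p i = y i" using subsetD[OF K(3) pK] subsetD[OF K(3) y] unfolding SUP_I_def by auto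
  ultimately show ?thesis unfolding p_def[symmetric] by auto
qed

lemma cont_sum_abs: "continuous_on S (\<lambda>v. \<Sum>i\<in>I. \<bar>v i - (w i :: real)\<bar>)"
  by (intro continuous_on_sum continuous_on_rabs continuous_on_diff continuous_on_const cont_coord[OF continuous_on_id])

lemma proj_cont:
  assumes fin: "finite I" and K: "compact K" "K \<noteq> {}" "cvx K" "K \<subseteq> SUP_I I"
  shows "continuous_on UNIV (proj I K)"
proof -
  obtain m where mK: "m \<in> K" and mmax: "\<And>y. y \<in> K \<Longrightarrow> (\<Sum>i\<in>I. \<bar>y i\<bar>) \<le> (\<Sum>i\<in>I. \<bar>m i\<bar>)"
    using continuous_attains_sup[OF K(1,2), of "\<lambda>y. \<Sum>i\<in>I. \<bar>y i\<bar>"]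
    using cont_sum_abs[where S=K and I=I and w="\<lambda>_. 0"] by auto
  define C where "C = (\<Sum>i\<in>I. \<bar>m i\<bar>)"
  have bnd: "\<bar>y i\<bar> \<le> C" if "y \<in> K" for y i
  proof (cases "i \<in> I")
    case True
    have "\<bar>y i\<bar> \<le> (\<Sum>i\<in>I. \<bar>y i\<bar>)" by (rule member_le_sum) (use fin True in auto)
    then show ?thesis using mmax[OF that] unfolding C_def by simp
  next
    case False then have "y i = 0" using that K(4) unfolding SUP_I_def by auto
    then show ?thesis unfolding C_def by (simp add: sum_nonneg)
  qed
  have est: "\<bar>proj I K v j - proj I K w j\<bar> \<le> sqrt (2 * C * (\<Sum>i\<in>I. \<bar>v i - w i\<bar>))" for v w j
  proof -
    define p where "p = proj I K v"
    define q where "q = proj I K w"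
    have pK: "p \<in> K" and qK: "q \<in> K" using proj_ex[OF K(1,2)] unfolding p_def q_def by auto
    have i1: "ip I (\<lambda>i. v i - p i) (\<lambda>i. q i - p i) \<le> 0" using proj_var[OF fin K(1-3) qK] unfolding p_def by simp
    have i2: "ip I (\<lambda>i. w i - q i) (\<lambda>i. p i - q i) \<le> 0" using proj_var[OF fin K(1-3) pK] unfolding q_def by simp
    have eq: "ip I (\<lambda>i. p i - q i) (\<lambda>i. p i - q i) =
      ip I (\<lambda>i. v i - w i) (\<lambda>i. p i - q i) + ip I (\<lambda>i. v i - p i) (\<lambda>i. q i - p i) + ip I (\<lambda>i. w i - q i) (\<lambda>i. p i - q i)"
      unfolding ip_def by (simp add: sum.distrib[symmetric] algebra_simps)
    have "ip I (\<lambda>i. v i - w i) (\<lambda>i. p i - q i) \<le> (\<Sum>i\<in>I. \<bar>v i - w i\<bar> * (2 * C))"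
      unfolding ip_def
    proof (rule sum_mono)
      fix i assume "i \<in> I"
      have "\<bar>p i - q i\<bar> \<le> 2 * C" using bnd[OF pK, of i] bnd[OF qK, of i] by simp
      then have "\<bar>(v i - w i) * (p i - q i)\<bar> \<le> \<bar>v i - w i\<bar> * (2 * C)"
        by (simp add: abs_mult mult_left_mono)
      then show "(v i - w i) * (p i - q i) \<le> \<bar>v i - w i\<bar> * (2 * C)" by simp
    qed
    then have A: "ip I (\<lambda>i. p i - q i) (\<lambda>i. p i - q i) \<le> 2 * C * (\<Sum>i\<in>I. \<bar>v i - w i\<bar>)"
      using eq i1 i2 by (simp add: sum_distrib_left[symmetric] mult.commute)
    have B: "(p j - q j)^2 \<le> ip I (\<lambda>i. p i - q i) (\<lambda>i. p i - q i)"
    proof (cases "j \<in> I")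
      case True
      show ?thesis unfolding ip_def power2_eq_square
        by (rule member_le_sum) (use fin True in auto)
    next
      case False then have "p j = 0" "q j = 0" using pK qK K(4) unfolding SUP_I_def by auto
      then show ?thesis using ip_self_nonneg[OF fin] by simp
    qed
    show ?thesis unfolding p_def[symmetric] q_def[symmetric]
      by (rule real_le_rsqrt) (use A B in simp)
  qed
  show ?thesis
  proof (rule continuous_on_coordinatewise_then_product)
    fix j
    show "continuous_on UNIV (\<lambda>v. proj I K v j)"
    proof (unfold continuous_on_def, intro ballI)
      fix w :: "'a \<Rightarrow> real" assume "w \<in> UNIV"
      have h: "((\<lambda>v. \<Sum>i\<in>I. \<bar>v i - w i\<bar>) \<longlongrightarrow> (\<Sum>i\<in>I. \<bar>w i - w i\<bar>)) (at w)"
        using cont_sum_abs[where S=UNIV and I=I and w=w] unfolding continuous_on_def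
        by (metis UNIV_I)
      then have "((\<lambda>v. 2 * C * (\<Sum>i\<in>I. \<bar>v i - w i\<bar>)) \<longlongrightarrow> 2 * C * 0) (at w)"
        by (intro tendsto_mult tendsto_const) simp
      from tendsto_real_sqrt[OF this]
      have h0: "((\<lambda>v. sqrt (2 * C * (\<Sum>i\<in>I. \<bar>v i - w i\<bar>))) \<longlongrightarrow> 0) (at w)" by simp
      have "((\<lambda>v. proj I K v j - proj I K w j) \<longlongrightarrow> 0) (at w)"
        by (rule Lim_null_comparison[OF _ h0]) (use est in simp)
      then show "((\<lambda>v. proj I K v j) \<longlongrightarrow> proj I K w j) (at w within UNIV)" by (rule LIM_zero_cancel)
    qed
  qed
qed

lemma cvx_brouwer:
  fixes f :: "('i \<Rightarrow> real) \<Rightarrow> ('i \<Rightarrow> real)"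
  assumes fin: "finite I" and K: "compact K" "K \<noteq> {}" "cvx K" "K \<subseteq> SUP_I I"
    and cf: "continuous_on K f" and fK: "f ` K \<subseteq> K"
  shows "\<exists>x\<in>K. f x = x"
proof (cases "I = {}")
  case True
  then have "\<And>x. x \<in> K \<Longrightarrow> x = (\<lambda>_. 0)" using K(4) unfolding SUP_I_def by auto
  then show ?thesis using K(2) fK by blast
next
  case False
  define D where "D = card I"
  have Dpos: "D > 0" using False fin unfolding D_def by auto
  define n where "n = D - 1"
  have le_n: "\<And>j. j \<le> n \<longleftrightarrow> j < D" unfolding n_def using Dpos by auto
  obtain h where h: "bij_betw h {0..<D} I" using ex_bij_betw_nat_finite[OF fin] unfolding D_def by blast
  define hi where "hi = inv_into {0..<D} h"
  have hi1: "\<And>i. i \<in> I \<Longrightarrow> h (hi i) = i" unfolding hi_def using h by (simp add: bij_betw_inv_into_right)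
  have hi2: "\<And>i. i \<in> I \<Longrightarrow> hi i < D" unfolding hi_def using h
    by (metis atLeastLessThan_iff bij_betw_def inv_into_into)
  have hD: "\<And>j. j < D \<Longrightarrow> h j \<in> I" using h unfolding bij_betw_def by auto
  define T :: "('i \<Rightarrow> real) \<Rightarrow> nat \<Rightarrow> real" where "T = (\<lambda>x j. if j \<le> n then x (h j) else 0)"
  define T' :: "(nat \<Rightarrow> real) \<Rightarrow> 'i \<Rightarrow> real" where "T' = (\<lambda>y i. if i \<in> I then y (hi i) else 0)"
  have TT': "T' (T x) = x" if "x \<in> SUP_I I" for x
  proof
    fix i show "T' (T x) i = x i"
      using that hi1 hi2 le_n unfolding T_def T'_def SUP_I_def by auto
  qed
  have cT: "continuous_on S T" for S
    unfolding T_def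
  proof (rule continuous_on_coordinatewise_then_product)
    fix i show "continuous_on S (\<lambda>x. if i \<le> n then x (h i) else 0)"
      by (cases "i \<le> n") (simp_all add: cont_coord[OF continuous_on_id])
  qed
  have cT': "continuous_on S T'" for S
    unfolding T'_def
  proof (rule continuous_on_coordinatewise_then_product)
    fix i show "continuous_on S (\<lambda>y. if i \<in> I then y (hi i) else 0)"
      by (cases "i \<in> I") (simp_all add: cont_coord[OF continuous_on_id])
  qed
  obtain m where mK: "m \<in> K" and mmax: "\<And>y. y \<in> K \<Longrightarrow> nsq n (T y) \<le> nsq n (T m)"
    using continuous_attains_sup[OF K(1,2), of "\<lambda>y. nsq n (T y)"] cont_nsq[OF cT] by blast
  define R where "R = nsq n (T m) + 1"
  have Rpos: "R > 0" unfolding R_def using nsq_nonneg[of n "T m"] by linarith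
  have RR: "nsq n (T m) \<le> R^2" unfolding R_def using nsq_nonneg[of n "T m"]
    by (simp add: power2_eq_square algebra_simps)
  define B where "B = {x. nsq n x \<le> R^2 \<and> (\<forall>i>n. x i = 0)}"
  have TB: "T y \<in> B" if "y \<in> K" for y
    using mmax[OF that] RR unfolding B_def T_def by auto
  define P where "P = proj I K"
  have cP: "continuous_on UNIV P" unfolding P_def by (rule proj_cont[OF fin K])
  have PK: "P v \<in> K" for v unfolding P_def using proj_ex[OF K(1,2)] by blast
  define g where "g = (\<lambda>y. T (f (P (T' y))))"
  have cg: "continuous_on B g"
  proof -
    have c1: "continuous_on B (\<lambda>y. P (T' y))"
      by (rule continuous_on_compose2[OF cP cT']) auto
    have c2: "continuous_on B (\<lambda>y. f (P (T' y)))"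
      by (rule continuous_on_compose2[OF cf c1]) (auto intro: PK)
    show ?thesis unfolding g_def by (rule continuous_on_compose2[OF cT c2]) auto
  qed
  have gB: "g ` B \<subseteq> B" unfolding g_def using TB fK PK by auto
  obtain y where yB: "nsq n y \<le> R^2 \<and> (\<forall>i>n. y i = 0)" and gy: "g y = y"
    using ball_brouwer[OF Rpos, of n g] cg gB unfolding B_def by blast
  define z where "z = f (P (T' y))"
  have zK: "z \<in> K" unfolding z_def using fK PK by auto
  have yz: "y = T z" using gy unfolding g_def z_def by simp
  have "P (T' y) = z" unfolding yz P_def using TT' K(4) zK proj_id[OF fin K(1,2,4) zK] by auto
  then have "T (f z) = T z" using gy yz unfolding g_def z_def by simp
  then have "T' (T (f z)) = T' (T z)" by simp
  moreover have "f z \<in> SUP_I I" "z \<in> SUP_I I" using zK fK K(4) by auto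
  ultimately have "f z = z" using TT' by metis
  then show ?thesis using zK by blast
qed

definition upd :: "('i \<Rightarrow> nat) \<Rightarrow> nat \<Rightarrow> ('i \<Rightarrow> real) \<Rightarrow> ('i \<Rightarrow> real) \<Rightarrow> ('i \<Rightarrow> real)" where
  "upd blk k x y = (\<lambda>c. if blk c = k then y c else x c)"

lemma abstract_nash:
  fixes u :: "nat \<Rightarrow> ('i \<Rightarrow> real) \<Rightarrow> real" and G :: "('i \<Rightarrow> real) \<Rightarrow> 'i \<Rightarrow> real"
  assumes fin: "finite I" and K: "compact K" "K \<noteq> {}" "cvx K" "K \<subseteq> SUP_I I"
    and cG: "continuous_on K G"
    and lin: "\<And>k x y. k < N \<Longrightarrow> x \<in> K \<Longrightarrow> y \<in> K \<Longrightarrow>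
        u k (upd blk k x y) - u k x = (\<Sum>c\<in>{c\<in>I. blk c = k}. G x c * (y c - x c))"
    and pr: "\<And>k x y. x \<in> K \<Longrightarrow> y \<in> K \<Longrightarrow> upd blk k x y \<in> K"
  shows "\<exists>x\<in>K. \<forall>k<N. \<forall>y\<in>K. u k (upd blk k x y) \<le> u k x"
proof -
  define P where "P = proj I K"
  have cP: "continuous_on UNIV P" unfolding P_def by (rule proj_cont[OF fin K])
  have PK: "P v \<in> K" for v unfolding P_def using proj_ex[OF K(1,2)] by blast
  define F where "F = (\<lambda>x. P (\<lambda>c. x c + G x c))"
  have cF: "continuous_on K F"
  proof -
    have "continuous_on K (\<lambda>x. (\<lambda>c. x c + G x c))"
      by (rule continuous_on_coordinatewise_then_product)
         (intro continuous_intros cont_coord[OF cG] cont_coord[OF continuous_on_id])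
    then show ?thesis unfolding F_def by (rule continuous_on_compose2[OF cP]) auto
  qed
  obtain x where xK: "x \<in> K" and Fx: "F x = x"
    using cvx_brouwer[OF fin K cF] PK unfolding F_def by blast
  have var: "(\<Sum>c\<in>I. G x c * (z c - x c)) \<le> 0" if zK: "z \<in> K" for z
    using proj_var[OF fin K(1-3) zK, of "\<lambda>c. x c + G x c"] Fx
    unfolding F_def P_def ip_def by simp
  show ?thesis
  proof (intro bexI[OF _ xK] allI impI ballI)
    fix k y assume k: "k < N" and yK: "y \<in> K"
    have "(\<Sum>c\<in>I. G x c * (upd blk k x y c - x c)) \<le> 0" by (rule var[OF pr[OF xK yK]])
    also have "(\<Sum>c\<in>I. G x c * (upd blk k x y c - x c)) = (\<Sum>c\<in>I. if blk c = k then G x c * (y c - x c) else 0)"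
      by (rule sum.cong) (auto simp: upd_def)
    also have "\<dots> = (\<Sum>c\<in>{c\<in>I. blk c = k}. G x c * (y c - x c))"
      using fin by (simp add: sum.inter_filter)
    finally show "u k (upd blk k x y) \<le> u k x" using lin[OF k xK yK] by simp
  qed
qed

definition fm :: "nat \<Rightarrow> complex mat \<Rightarrow> (nat \<Rightarrow> complex) \<Rightarrow> complex" where
  "fm d X y = (\<Sum>i<d. \<Sum>j<d. cnj (y i) * X $$ (i,j) * y j)"

lemma psd_fm: "psd d X \<Longrightarrow> Im (fm d X y) = 0 \<and> 0 \<le> Re (fm d X y)"
  unfolding psd_def fm_def Let_def complex_is_Real_iff by auto

definition bil :: "nat \<Rightarrow> complex mat \<Rightarrow> (nat \<Rightarrow> complex) \<Rightarrow> (nat \<Rightarrow> complex) \<Rightarrow> complex" where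
  "bil d X u v = (\<Sum>i<d. \<Sum>j<d. cnj (u i) * X $$ (i,j) * v j)"

lemma fm_bil: "fm d X y = bil d X y y" unfolding fm_def bil_def ..

lemma bil_add: "bil d X (\<lambda>i. u i + v i) (\<lambda>i. u i + v i) = bil d X u u + bil d X u v + bil d X v u + bil d X v v"
proof -
  have e: "\<And>i j. cnj (u i + v i) * X$$(i,j) * (u j + v j) =
     cnj (u i) * X$$(i,j) * u j + cnj (u i) * X$$(i,j) * v j + cnj (v i) * X$$(i,j) * u j + cnj (v i) * X$$(i,j) * v j"
    by (simp add: algebra_simps)
  show ?thesis unfolding bil_def by (simp only: e sum.distrib)
qed

lemma mif: "(a::complex) * (if P then b else c) = (if P then a * b else a * c)"
  "(if P then b else c) * (a::complex) = (if P then b * a else c * a)"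
  "cnj (if P then b else c) = (if P then cnj b else cnj c)" by auto

lemma bil_delta: assumes "a < d" "b < d"
  shows "bil d X (\<lambda>i. if i = a then s else 0) (\<lambda>j. if j = b then t else 0) = cnj s * X$$(a,b) * t"
  unfolding bil_def using assms by (simp add: mif sum.delta sum.delta' cong: if_cong)

lemma fm_add_sub: "fm d X (\<lambda>i. y i + z i) + fm d X (\<lambda>i. y i - z i) = 2 * fm d X y + 2 * fm d X z"
proof -
  have e: "\<And>i j. cnj (y i + z i) * X$$(i,j) * (y j + z j) + cnj (y i - z i) * X$$(i,j) * (y j - z j)
      = 2 * (cnj (y i) * X$$(i,j) * y j) + 2 * (cnj (z i) * X$$(i,j) * z j)"
    by (simp add: algebra_simps)
  have "fm d X (\<lambda>i. y i + z i) + fm d X (\<lambda>i. y i - z i) =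
     (\<Sum>i<d. \<Sum>j<d. cnj (y i + z i) * X$$(i,j) * (y j + z j) + cnj (y i - z i) * X$$(i,j) * (y j - z j))"
    unfolding fm_def by (simp only: sum.distrib)
  also have "\<dots> = (\<Sum>i<d. \<Sum>j<d. 2 * (cnj (y i) * X$$(i,j) * y j) + 2 * (cnj (z i) * X$$(i,j) * z j))"
    by (simp only: e)
  also have "\<dots> = 2 * fm d X y + 2 * fm d X z"
    unfolding fm_def by (simp only: sum.distrib sum_distrib_left)
  finally show ?thesis .
qed

lemma fm_zero: "fm d X (\<lambda>i. 0) = 0" unfolding fm_def by simp

lemma fm_sum_bound:
  assumes X: "psd d X" and fin: "finite R"
  shows "Re (fm d X (\<lambda>i. \<Sum>r\<in>R. Y r i)) \<le> 2 ^ card R * (\<Sum>r\<in>R. Re (fm d X (Y r)))"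
  using fin
proof (induction R rule: finite_induct)
  case empty
  then show ?case by (simp add: fm_zero)
next
  case (insert r R)
  define S where "S = (\<lambda>i. \<Sum>r\<in>R. Y r i)"
  have e: "(\<lambda>i. \<Sum>r\<in>insert r R. Y r i) = (\<lambda>i. Y r i + S i)" using insert by (simp add: S_def)
  have "Re (fm d X (\<lambda>i. Y r i + S i)) \<le> Re (fm d X (\<lambda>i. Y r i + S i)) + Re (fm d X (\<lambda>i. Y r i - S i))"
    using psd_fm[OF X] by simp
  also have "\<dots> = 2 * Re (fm d X (Y r)) + 2 * Re (fm d X S)"
    using arg_cong[OF fm_add_sub[of d X "Y r" S], of Re] by simp
  also have "\<dots> \<le> 2 * Re (fm d X (Y r)) + 2 * (2 ^ card R * (\<Sum>r\<in>R. Re (fm d X (Y r))))"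
    using insert.IH unfolding S_def by simp
  also have "\<dots> \<le> 2 ^ card (insert r R) * (\<Sum>r\<in>insert r R. Re (fm d X (Y r)))"
  proof -
    have a: "0 \<le> Re (fm d X (Y r))" using psd_fm[OF X] by simp
    have b: "0 \<le> (\<Sum>r\<in>R. Re (fm d X (Y r)))" using psd_fm[OF X] by (simp add: sum_nonneg)
    have c: "(2::real) \<le> 2 ^ Suc (card R)" by simp
    have "2 * Re (fm d X (Y r)) \<le> 2 ^ Suc (card R) * Re (fm d X (Y r))"
      using mult_right_mono[OF c a] .
    then show ?thesis using insert b by (simp add: algebra_simps)
  qed
  finally show ?case unfolding e .
qed

lemma fm_delta1: assumes "g < d" shows "fm d X (\<lambda>i. if i = g then 1 else 0) = X $$ (g,g)"
  unfolding fm_bil using bil_delta[OF assms assms, of X 1 1] by simp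

lemma fm_delta2: assumes "a < d" "b < d"
  shows "fm d X (\<lambda>i. (if i = a then s else 0) + (if i = b then t else 0)) =
    cnj s * X$$(a,a) * s + cnj s * X$$(a,b) * t + cnj t * X$$(b,a) * s + cnj t * X$$(b,b) * t"
  unfolding fm_bil bil_add using assms by (simp add: bil_delta)

lemma psd_entry_bound:
  assumes X: "psd d X" and H: "\<And>a b. a < d \<Longrightarrow> b < d \<Longrightarrow> X$$(a,b) = cnj (X$$(b,a))"
    and D: "\<And>g. g < d \<Longrightarrow> Re (X$$(g,g)) \<le> B" and ab: "a < d" "b < d"
  shows "\<bar>Re (X$$(a,b))\<bar> \<le> B \<and> \<bar>Im (X$$(a,b))\<bar> \<le> B"
proof (cases "a = b")
  case True
  have "Im (X$$(a,a)) = 0 \<and> 0 \<le> Re (X$$(a,a))" using psd_fm[OF X, of "\<lambda>i. if i = a then 1 else 0"] fm_delta1[OF ab(1)] by simp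
  then show ?thesis using True D[OF ab(1)] by simp
next
  case False
  have hb: "X$$(b,a) = cnj (X$$(a,b))" by (rule H[OF ab(2) ab(1)])
  have p: "0 \<le> Re (fm d X (\<lambda>i. (if i = a then s else 0) + (if i = b then t else 0)))" for s t
    using psd_fm[OF X] by simp
  note f = p[unfolded fm_delta2[OF ab], unfolded hb]
  have 1: "0 \<le> Re (X$$(a,a)) + Re (X$$(b,b)) + 2 * Re (X$$(a,b))" using f[of 1 1] by simp
  have 2: "0 \<le> Re (X$$(a,a)) + Re (X$$(b,b)) - 2 * Re (X$$(a,b))" using f[of 1 "-1"] by simp
  have 3: "0 \<le> Re (X$$(a,a)) + Re (X$$(b,b)) - 2 * Im (X$$(a,b))" using f[of 1 "\<i>"] by simp
  have 4: "0 \<le> Re (X$$(a,a)) + Re (X$$(b,b)) + 2 * Im (X$$(a,b))" using f[of 1 "-\<i>"] by simp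
  show ?thesis using 1 2 3 4 D[OF ab(1)] D[OF ab(2)] by linarith
qed

lemma sum_divmod: fixes n :: nat shows "(\<Sum>r<n * n. g (r div n) (r mod n)) = (\<Sum>i<n. \<Sum>j<n. (g i j :: 'a::comm_monoid_add))"
proof -
  have "(\<Sum>r<n * n. g (r div n) (r mod n)) = (\<Sum>p\<in>{..<n}\<times>{..<n}. g (fst p) (snd p))"
  proof (rule sum.reindex_bij_witness[where i="\<lambda>p. fst p * n + snd p" and j="\<lambda>r. (r div n, r mod n)"])
    fix a assume a: "a \<in> {..<n * n}"
    then have n0: "n > 0" by (cases n) auto
    show "fst (a div n, a mod n) * n + snd (a div n, a mod n) = a" by simp
    show "(a div n, a mod n) \<in> {..<n} \<times> {..<n}" using a n0 by (auto simp: less_mult_imp_div_less)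
    show "g (fst (a div n, a mod n)) (snd (a div n, a mod n)) = g (a div n) (a mod n)" by simp
  next
    fix b assume b: "b \<in> {..<n} \<times> {..<n}"
    then obtain b1 b2 where bb: "b = (b1,b2)" "b1 < n" "b2 < n" by auto
    show "((fst b * n + snd b) div n, (fst b * n + snd b) mod n) = b" using bb by simp
    have "b1 * n + b2 < b1 * n + n" using bb by simp
    also have "\<dots> = Suc b1 * n" by simp
    also have "\<dots> \<le> n * n" using bb by (intro mult_le_mono1) simp
    finally show "fst b * n + snd b \<in> {..<n * n}" using bb by simp
  qed
  then show ?thesis by (simp add: sum.cartesian_product split_def)
qed

lemma swap3: "(\<Sum>a\<in>A. \<Sum>b\<in>B. \<Sum>c\<in>C. f a b c) = (\<Sum>c\<in>C. \<Sum>a\<in>A. \<Sum>b\<in>B. (f a b c :: 'x::comm_monoid_add))"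
proof -
  have "(\<Sum>a\<in>A. \<Sum>b\<in>B. \<Sum>c\<in>C. f a b c) = (\<Sum>a\<in>A. \<Sum>c\<in>C. \<Sum>b\<in>B. f a b c)"
    by (rule sum.cong[OF refl], rule sum.swap)
  also have "\<dots> = (\<Sum>c\<in>C. \<Sum>a\<in>A. \<Sum>b\<in>B. f a b c)" by (rule sum.swap)
  finally show ?thesis .
qed

lemma basis_inv:
  assumes mb: "matrix_basis n E"
  obtains cc where "\<And>g a. g < n * n \<Longrightarrow> a < n * n \<Longrightarrow>
     (\<Sum>r<n * n. cc r g * E a $$ (r div n, r mod n)) = (if g = a then 1 else 0)"
proof -
  have carr: "\<And>a. a < n * n \<Longrightarrow> E a \<in> carrier_mat n n" using mb unfolding matrix_basis_def power2_eq_square by auto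
  have sp: "\<forall>X \<in> carrier_mat n n. \<exists>c :: nat \<Rightarrow> complex. X = mat n n (\<lambda>(i,j). \<Sum>a<n * n. c a * E a $$ (i,j))"
    using mb unfolding matrix_basis_def power2_eq_square by blast
  define Z where "Z r = mat n n (\<lambda>(i,j). if i = r div n \<and> j = r mod n then 1 else (0::complex))" for r
  have "\<forall>r. \<exists>c. Z r = mat n n (\<lambda>(i,j). \<Sum>a<n * n. c a * E a $$ (i,j))"
  proof
    fix r show "\<exists>c. Z r = mat n n (\<lambda>(i,j). \<Sum>a<n * n. c a * E a $$ (i,j))"
      using bspec[OF sp, of "Z r"] by (simp add: Z_def)
  qed
  from choice[OF this] obtain cc where cc: "\<And>r. Z r = mat n n (\<lambda>(i,j). \<Sum>a<n * n. cc r a * E a $$ (i,j))"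
    by blast
  define W where "W = mat (n * n) (n * n) (\<lambda>(r,a). E a $$ (r div n, r mod n))"
  define C where "C = mat (n * n) (n * n) (\<lambda>(a,r). cc r a)"
  have WC: "W * C = 1\<^sub>m (n * n)"
  proof (rule eq_matI)
    fix r' r assume r': "r' < dim_row (1\<^sub>m (n * n))" and r: "r < dim_col (1\<^sub>m (n * n))"
    then have r'n: "r' < n * n" and rn: "r < n * n" by auto
    then have n0: "n > 0" by (cases n) auto
    have i: "r' div n < n" "r' mod n < n" using r'n n0 by (auto simp: less_mult_imp_div_less)
    have "(W * C) $$ (r', r) = (\<Sum>a<n * n. E a $$ (r' div n, r' mod n) * cc r a)"
      using r'n rn unfolding W_def C_def by (simp add: scalar_prod_def atLeast0LessThan)
    also have "\<dots> = Z r $$ (r' div n, r' mod n)"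
      unfolding cc using i by (simp add: mult.commute)
    also have "\<dots> = (if r' = r then 1 else 0)"
      unfolding Z_def using i
      by (auto, metis div_mult_mod_eq)
    finally show "(W * C) $$ (r', r) = 1\<^sub>m (n * n) $$ (r', r)" using r'n rn by simp
  qed (auto simp: W_def C_def)
  have CW: "C * W = 1\<^sub>m (n * n)"
    by (rule mat_mult_left_right_inverse[OF _ _ WC]) (auto simp: W_def C_def)
  show ?thesis
  proof (rule that)
    fix g a assume g: "g < n * n" and a: "a < n * n"
    have "(C * W) $$ (g, a) = (\<Sum>r<n * n. cc r g * E a $$ (r div n, r mod n))"
      using g a unfolding W_def C_def by (simp add: scalar_prod_def atLeast0LessThan)
    then show "(\<Sum>r<n * n. cc r g * E a $$ (r div n, r mod n)) = (if g = a then 1 else 0)"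
      using CW g a by simp
  qed
qed

lemma trace_id:
  assumes carr: "\<And>a. a < n * n \<Longrightarrow> E a \<in> carrier_mat n n"
    and tp: "mat n n (\<lambda>(i,j). \<Sum>\<alpha><n * n. \<Sum>\<beta><n * n. cnj (X$$(\<alpha>,\<beta>)) * (adj (E \<alpha>) * E \<beta>)$$(i,j)) = 1\<^sub>m n"
  shows "(\<Sum>r<n * n. fm (n * n) X (\<lambda>a. cnj (E a $$ (r div n, r mod n)))) = of_nat n"
proof -
  let ?F = "\<lambda>l i \<alpha> \<beta>. E \<alpha> $$ (l,i) * X$$(\<alpha>,\<beta>) * cnj (E \<beta> $$ (l,i))"
  have diag: "(\<Sum>\<alpha><n * n. \<Sum>\<beta><n * n. cnj (X$$(\<alpha>,\<beta>)) * (\<Sum>l<n. cnj (E \<alpha> $$ (l,i)) * E \<beta> $$ (l,i))) = 1"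
    if i: "i < n" for i
  proof -
    have "(mat n n (\<lambda>(i,j). \<Sum>\<alpha><n * n. \<Sum>\<beta><n * n. cnj (X$$(\<alpha>,\<beta>)) * (adj (E \<alpha>) * E \<beta>)$$(i,j))) $$ (i,i) = 1\<^sub>m n $$ (i,i)"
      using tp by simp
    then have 1: "(\<Sum>\<alpha><n * n. \<Sum>\<beta><n * n. cnj (X$$(\<alpha>,\<beta>)) * (adj (E \<alpha>) * E \<beta>)$$(i,i)) = 1" using i by simp
    have 2: "(adj (E \<alpha>) * E \<beta>) $$ (i,i) = (\<Sum>l<n. cnj (E \<alpha> $$ (l,i)) * E \<beta> $$ (l,i))"
      if "\<alpha> \<in> {..<n * n}" "\<beta> \<in> {..<n * n}" for \<alpha> \<beta>
      using carr[of \<alpha>] carr[of \<beta>] that i by (simp add: adj_def scalar_prod_def atLeast0LessThan)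
    show ?thesis unfolding 1[symmetric]
      by (intro sum.cong refl) (simp add: 2)
  qed
  have "(\<Sum>r<n * n. fm (n * n) X (\<lambda>a. cnj (E a $$ (r div n, r mod n)))) =
        (\<Sum>r<n * n. \<Sum>\<alpha><n * n. \<Sum>\<beta><n * n. ?F (r div n) (r mod n) \<alpha> \<beta>)"
    unfolding fm_def by simp
  also have "\<dots> = (\<Sum>l<n. \<Sum>i<n. \<Sum>\<alpha><n * n. \<Sum>\<beta><n * n. ?F l i \<alpha> \<beta>)"
    by (rule sum_divmod)
  also have "\<dots> = (\<Sum>i<n. \<Sum>l<n. \<Sum>\<alpha><n * n. \<Sum>\<beta><n * n. ?F l i \<alpha> \<beta>)"
    by (rule sum.swap)
  also have "\<dots> = (\<Sum>i<n. \<Sum>\<alpha><n * n. \<Sum>\<beta><n * n. \<Sum>l<n. ?F l i \<alpha> \<beta>)"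
    by (rule sum.cong[OF refl], rule swap3[symmetric])
  also have "\<dots> = (\<Sum>i<n. cnj (\<Sum>\<alpha><n * n. \<Sum>\<beta><n * n. cnj (X$$(\<alpha>,\<beta>)) * (\<Sum>l<n. cnj (E \<alpha> $$ (l,i)) * E \<beta> $$ (l,i))))"
    by (simp add: sum_distrib_left algebra_simps)
  also have "\<dots> = (\<Sum>i<n. 1)"
    by (rule sum.cong[OF refl]) (simp add: diag)
  also have "\<dots> = of_nat n" by simp
  finally show ?thesis .
qed

lemma fm_scale: "fm d X (\<lambda>i. c * y i) = cnj c * c * fm d X y"
  unfolding fm_def by (simp add: sum_distrib_left algebra_simps)

lemma fm_cong: "(\<And>a. a < d \<Longrightarrow> y a = z a) \<Longrightarrow> fm d X y = fm d X z"
  unfolding fm_def by (intro sum.cong refl) auto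

lemma strat_bound:
  assumes mb: "matrix_basis n E"
  shows "\<exists>B. \<forall>X. psd (n * n) X \<longrightarrow> (\<forall>\<alpha><n * n. \<forall>\<beta><n * n. X$$(\<alpha>,\<beta>) = cnj (X$$(\<beta>,\<alpha>))) \<longrightarrow>
     mat n n (\<lambda>(i,j). \<Sum>\<alpha><n * n. \<Sum>\<beta><n * n. cnj (X$$(\<alpha>,\<beta>)) * (adj (E \<alpha>) * E \<beta>)$$(i,j)) = 1\<^sub>m n \<longrightarrow>
     (\<forall>a<n * n. \<forall>b<n * n. \<bar>Re (X$$(a,b))\<bar> \<le> B \<and> \<bar>Im (X$$(a,b))\<bar> \<le> B)"
proof -
  have carr: "\<And>a. a < n * n \<Longrightarrow> E a \<in> carrier_mat n n" using mb unfolding matrix_basis_def power2_eq_square by auto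
  obtain cc where cc: "\<And>g a. g < n * n \<Longrightarrow> a < n * n \<Longrightarrow>
     (\<Sum>r<n * n. cc r g * E a $$ (r div n, r mod n)) = (if g = a then 1 else 0)"
    using basis_inv[OF mb] by blast
  define d where "d = n * n"
  define B where "B = 2^ d * real n * (\<Sum>g<d. \<Sum>r<d. (cmod (cc r g))^2)"
  show ?thesis
  proof (rule exI[of _ B], rule allI, intro impI)
    fix X assume X: "psd (n * n) X" and H: "\<forall>\<alpha><n * n. \<forall>\<beta><n * n. X$$(\<alpha>,\<beta>) = cnj (X$$(\<beta>,\<alpha>))"
      and tp: "mat n n (\<lambda>(i,j). \<Sum>\<alpha><n * n. \<Sum>\<beta><n * n. cnj (X$$(\<alpha>,\<beta>)) * (adj (E \<alpha>) * E \<beta>)$$(i,j)) = 1\<^sub>m n"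
    define w where "w r = (\<lambda>a. cnj (E a $$ (r div n, r mod n)))" for r
    have Xd: "psd d X" using X unfolding d_def .
    have tr: "(\<Sum>r<d. fm d X (w r)) = of_nat n" unfolding d_def w_def by (rule trace_id[OF carr tp])
    have wpos: "Im (fm d X (w r)) = 0 \<and> 0 \<le> Re (fm d X (w r))" for r using psd_fm[OF Xd] by simp
    have wle: "Re (fm d X (w r)) \<le> real n" if r: "r < d" for r
    proof -
      have "Re (fm d X (w r)) \<le> (\<Sum>r<d. Re (fm d X (w r)))"
        by (rule member_le_sum) (use r wpos in auto)
      also have "\<dots> = Re (\<Sum>r<d. fm d X (w r))" by simp
      also have "\<dots> = real n" unfolding tr by simp
      finally show ?thesis .
    qed
    have D: "Re (X$$(g,g)) \<le> B" if g: "g < d" for g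
    proof -
      define Y where "Y r = (\<lambda>a. cnj (cc r g) * w r a)" for r
      have "X$$(g,g) = fm d X (\<lambda>a. if a = g then 1 else 0)" using fm_delta1[OF g] by simp
      also have "\<dots> = fm d X (\<lambda>a. \<Sum>r<d. Y r a)"
      proof (rule fm_cong)
        fix a assume a: "a < d"
        have "(\<Sum>r<d. Y r a) = cnj (\<Sum>r<d. cc r g * E a $$ (r div n, r mod n))"
          unfolding Y_def w_def by simp
        also have "\<dots> = (if a = g then 1 else 0)" using cc[of g a] g a unfolding d_def by auto
        finally show "(if a = g then 1 else 0) = (\<Sum>r<d. Y r a)" by simp
      qed
      finally have "Re (X$$(g,g)) = Re (fm d X (\<lambda>a. \<Sum>r<d. Y r a))" by simp
      also have "\<dots> \<le> 2^ card {..<d} * (\<Sum>r<d. Re (fm d X (Y r)))"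
        by (rule fm_sum_bound[OF Xd]) simp
      also have "\<dots> = 2^ d * (\<Sum>r<d. (cmod (cc r g))^2 * Re (fm d X (w r)))"
      proof -
        have "Re (fm d X (Y r)) = (cmod (cc r g))^2 * Re (fm d X (w r))" for r
        proof -
          have "fm d X (Y r) = cnj (cnj (cc r g)) * cnj (cc r g) * fm d X (w r)"
            unfolding Y_def by (rule fm_scale)
          also have "cnj (cnj (cc r g)) * cnj (cc r g) = complex_of_real ((cmod (cc r g))^2)"
            by (metis complex_cnj_cnj complex_norm_square)
          finally show ?thesis using wpos[of r] by simp
        qed
        then show ?thesis by simp
      qed
      also have "\<dots> \<le> 2^ d * (\<Sum>r<d. (cmod (cc r g))^2 * real n)"
        by (intro mult_left_mono sum_mono mult_left_mono wle) auto
      also have "\<dots> = 2^ d * real n * (\<Sum>r<d. (cmod (cc r g))^2)"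
        by (simp add: sum_distrib_left sum_distrib_right algebra_simps)
      also have "\<dots> \<le> B" unfolding B_def
      proof (intro mult_left_mono)
        show "(\<Sum>r<d. (cmod (cc r g))^2) \<le> (\<Sum>g<d. \<Sum>r<d. (cmod (cc r g))^2)"
          by (rule member_le_sum[where f="\<lambda>g. \<Sum>r<d. (cmod (cc r g))^2"]) (use g in \<open>auto intro: sum_nonneg\<close>)
      qed auto
      finally show ?thesis .
    qed
    show "\<forall>a<n * n. \<forall>b<n * n. \<bar>Re (X$$(a,b))\<bar> \<le> B \<and> \<bar>Im (X$$(a,b))\<bar> \<le> B"
    proof (intro allI impI)
      fix a b assume ab: "a < n * n" "b < n * n"
      show "\<bar>Re (X$$(a,b))\<bar> \<le> B \<and> \<bar>Im (X$$(a,b))\<bar> \<le> B"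
      proof (rule psd_entry_bound[OF X _ _ ab])
        show "\<And>a b. a < n * n \<Longrightarrow> b < n * n \<Longrightarrow> X $$ (a, b) = cnj (X $$ (b, a))" using H by blast
        show "\<And>g. g < n * n \<Longrightarrow> Re (X $$ (g, g)) \<le> B" using D unfolding d_def by blast
      qed
    qed
  qed
qed

type_synonym crd = "nat \<times> nat \<times> nat \<times> bool"

definition ent :: "(crd \<Rightarrow> real) \<Rightarrow> nat \<Rightarrow> nat \<Rightarrow> nat \<Rightarrow> complex" where
  "ent x j a b = complex_of_real (x (j,a,b,True)) + \<i> * complex_of_real (x (j,a,b,False))"

definition dec :: "nat \<Rightarrow> (crd \<Rightarrow> real) \<Rightarrow> nat \<Rightarrow> complex mat" where
  "dec d x j = mat d d (\<lambda>(a,b). ent x j a b)"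

definition Icrd :: "nat \<Rightarrow> nat \<Rightarrow> crd set" where
  "Icrd N d = {..<N} \<times> {..<d} \<times> {..<d} \<times> UNIV"

definition encA :: "nat \<Rightarrow> nat \<Rightarrow> complex mat \<Rightarrow> crd \<Rightarrow> real" where
  "encA N d X = (\<lambda>(j,a,b,t). if j < N \<and> a < d \<and> b < d then (if t then Re (X$$(a,b)) else Im (X$$(a,b))) else 0)"

lemma finite_Icrd: "finite (Icrd N d)" unfolding Icrd_def by simp

lemma Re_ent[simp]: "Re (ent x j a b) = x (j,a,b,True)" and Im_ent[simp]: "Im (ent x j a b) = x (j,a,b,False)"
  unfolding ent_def by simp_all

lemma ent_encA: "j < N \<Longrightarrow> a < d \<Longrightarrow> b < d \<Longrightarrow> ent (encA N d X) j a b = X$$(a,b)"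
  unfolding ent_def encA_def by (simp add: complex_eq_iff)

lemma dec_index: "a < d \<Longrightarrow> b < d \<Longrightarrow> dec d x j $$ (a,b) = ent x j a b"
  unfolding dec_def by simp

lemma dec_carrier: "dec d x j \<in> carrier_mat d d" unfolding dec_def by simp

lemma dec_encA: "j < N \<Longrightarrow> X \<in> carrier_mat d d \<Longrightarrow> dec d (encA N d X) j = X"
  by (rule eq_matI) (auto simp: dec_index ent_encA dec_def)

lemma encA_SUP: "encA N d X \<in> SUP_I (Icrd N d)"
  unfolding SUP_I_def Icrd_def encA_def by auto

lemma cont_ent: "continuous_on S (\<lambda>x. ent x j a b)"
  unfolding ent_def by (intro continuous_intros cont_coord[OF continuous_on_id])

definition fmE :: "nat \<Rightarrow> (crd \<Rightarrow> real) \<Rightarrow> nat \<Rightarrow> (nat \<Rightarrow> complex) \<Rightarrow> complex" where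
  "fmE d x k y = (\<Sum>i<d. \<Sum>j<d. cnj (y i) * ent x k i j * y j)"

definition tpE :: "nat \<Rightarrow> (nat \<Rightarrow> complex mat) \<Rightarrow> (crd \<Rightarrow> real) \<Rightarrow> nat \<Rightarrow> nat \<Rightarrow> nat \<Rightarrow> complex" where
  "tpE d E x k i j = (\<Sum>\<alpha><d. \<Sum>\<beta><d. cnj (ent x k \<alpha> \<beta>) * (adj (E \<alpha>) * E \<beta>)$$(i,j))"

lemma strat_char:
  "dec (4^ q) x k \<in> strategies q E \<longleftrightarrow>
     (\<forall>\<alpha><4^ q. \<forall>\<beta><4^ q. ent x k \<alpha> \<beta> = cnj (ent x k \<beta> \<alpha>)) \<and>
     (\<forall>y. Im (fmE (4^ q) x k y) = 0 \<and> 0 \<le> Re (fmE (4^ q) x k y)) \<and>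
     (\<forall>i<2^ q. \<forall>j<2^ q. tpE (4^ q) E x k i j = (if i = j then 1 else 0))"
proof -
  let ?X = "dec (4^ q) x k"
  have h: "hermitian ?X \<longleftrightarrow> (\<forall>\<alpha><4^ q. \<forall>\<beta><4^ q. ent x k \<alpha> \<beta> = cnj (ent x k \<beta> \<alpha>))"
    unfolding hermitian_def
  proof
    assume A: "adj ?X = ?X"
    show "\<forall>\<alpha><4^ q. \<forall>\<beta><4^ q. ent x k \<alpha> \<beta> = cnj (ent x k \<beta> \<alpha>)"
    proof (intro allI impI)
      fix \<alpha> \<beta> :: nat assume ab: "\<alpha> < 4^ q" "\<beta> < 4^ q"
      have "adj ?X $$ (\<alpha>,\<beta>) = cnj (ent x k \<beta> \<alpha>)" using ab by (simp add: adj_def dec_def)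
      then show "ent x k \<alpha> \<beta> = cnj (ent x k \<beta> \<alpha>)" using ab unfolding A by (simp add: dec_index)
    qed
  next
    assume H: "\<forall>\<alpha><4^ q. \<forall>\<beta><4^ q. ent x k \<alpha> \<beta> = cnj (ent x k \<beta> \<alpha>)"
    show "adj ?X = ?X"
    proof (rule eq_matI)
      fix i j assume "i < dim_row ?X" "j < dim_col ?X"
      then have ij: "i < 4^ q" "j < 4^ q" by (simp_all add: dec_def)
      have "adj ?X $$ (i,j) = cnj (ent x k j i)" using ij by (simp add: adj_def dec_def)
      also have "\<dots> = ent x k i j" using H ij by metis
      also have "\<dots> = ?X $$ (i,j)" using ij by (simp add: dec_index)
      finally show "adj ?X $$ (i,j) = ?X $$ (i,j)" .
    qed (simp_all add: dec_def adj_def)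
  qed
  have fmeq: "(\<Sum>i<4^ q. \<Sum>j<4^ q. cnj (y i) * ?X $$ (i,j) * y j) = fmE (4^ q) x k y" for y
    unfolding fmE_def by (intro sum.cong refl) (simp add: dec_index)
  have p: "psd (4^ q) ?X \<longleftrightarrow> (\<forall>y. Im (fmE (4^ q) x k y) = 0 \<and> 0 \<le> Re (fmE (4^ q) x k y))"
    unfolding psd_def Let_def fmeq complex_is_Real_iff using dec_carrier by blast
  have tpeq: "(\<Sum>\<alpha><4^ q. \<Sum>\<beta><4^ q. cnj (?X $$ (\<alpha>,\<beta>)) * (adj (E \<alpha>) * E \<beta>) $$ (i,j)) = tpE (4^ q) E x k i j" for i j
    unfolding tpE_def by (intro sum.cong refl) (simp add: dec_index)
  have t: "(mat (2^ q) (2^ q) (\<lambda>(i,j). \<Sum>\<alpha><4^ q. \<Sum>\<beta><4^ q. cnj (?X $$ (\<alpha>,\<beta>)) * (adj (E \<alpha>) * E \<beta>) $$ (i,j)) = 1\<^sub>m (2^ q))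
     \<longleftrightarrow> (\<forall>i<2^ q. \<forall>j<2^ q. tpE (4^ q) E x k i j = (if i = j then 1 else 0))"
    unfolding tpeq by (auto simp: mat_eq_iff)
  show ?thesis unfolding strategies_def mem_Collect_eq h p t using dec_carrier by blast
qed

lemma closed_const_imp: "(Q \<Longrightarrow> closed {x. P x}) \<Longrightarrow> closed {x. Q \<longrightarrow> P x}"
  by (cases Q) auto

lemma cont_fmE: "continuous_on UNIV (\<lambda>x. fmE d x k y)"
  unfolding fmE_def by (intro continuous_intros cont_ent)

lemma cont_tpE: "continuous_on UNIV (\<lambda>x. tpE d E x k i j)"
  unfolding tpE_def by (intro continuous_intros cont_ent)

definition Kset :: "nat \<Rightarrow> nat \<Rightarrow> (nat \<Rightarrow> complex mat) \<Rightarrow> (crd \<Rightarrow> real) set" where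
  "Kset N q E = {x. x \<in> SUP_I (Icrd N (4^ q)) \<and> (\<forall>k<N. dec (4^ q) x k \<in> strategies q E)}"

lemma closed_Kset: "closed (Kset N q E)"
proof -
  have e: "Kset N q E = {x. (\<forall>c. c \<notin> Icrd N (4^ q) \<longrightarrow> x c = 0) \<and>
     (\<forall>k. k < N \<longrightarrow>
     (\<forall>\<alpha>. \<alpha> < 4^ q \<longrightarrow> (\<forall>\<beta>. \<beta> < 4^ q \<longrightarrow> ent x k \<alpha> \<beta> = cnj (ent x k \<beta> \<alpha>))) \<and>
     (\<forall>y. Im (fmE (4^ q) x k y) = 0 \<and> 0 \<le> Re (fmE (4^ q) x k y)) \<and>
     (\<forall>i. i < 2^ q \<longrightarrow> (\<forall>j. j < 2^ q \<longrightarrow> tpE (4^ q) E x k i j = (if i = j then 1 else 0))))}"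
    unfolding Kset_def SUP_I_def strat_char by blast
  show ?thesis unfolding e
    by (intro closed_Collect_conj closed_Collect_all closed_const_imp closed_Collect_eq closed_Collect_le
        continuous_intros cont_ent cont_fmE cont_tpE cont_coord[OF continuous_on_id])
qed

lemma nn4: "(2::nat)^ q * 2^ q = 4^ q" by (simp add: power_mult_distrib[symmetric])

lemma adj_index: "X \<in> carrier_mat d d \<Longrightarrow> a < d \<Longrightarrow> b < d \<Longrightarrow> adj X $$ (a,b) = cnj (X $$ (b,a))"
  unfolding adj_def by auto

lemma mult_index_sum: "A \<in> carrier_mat n n \<Longrightarrow> B \<in> carrier_mat n n \<Longrightarrow> i < n \<Longrightarrow> j < n \<Longrightarrow>
   (A * B) $$ (i,j) = (\<Sum>l<n. A $$ (i,l) * B $$ (l,j))"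
  by (simp add: scalar_prod_def atLeast0LessThan)

lemma strat_props:
  assumes "X \<in> strategies q E"
  shows "psd (4^ q) X \<and> (\<forall>\<alpha><4^ q. \<forall>\<beta><4^ q. X$$(\<alpha>,\<beta>) = cnj (X$$(\<beta>,\<alpha>))) \<and>
    mat (2^ q) (2^ q) (\<lambda>(i,j). \<Sum>\<alpha><2^ q * 2^ q. \<Sum>\<beta><2^ q * 2^ q. cnj (X$$(\<alpha>,\<beta>)) * (adj (E \<alpha>) * E \<beta>)$$(i,j)) = 1\<^sub>m (2^ q)"
proof -
  have c: "X \<in> carrier_mat (4^ q) (4^ q)" and h: "adj X = X" and p: "psd (4^ q) X"
    and t: "mat (2^ q) (2^ q) (\<lambda>(i,j). \<Sum>\<alpha><4^ q. \<Sum>\<beta><4^ q. cnj (X$$(\<alpha>,\<beta>)) * (adj (E \<alpha>) * E \<beta>)$$(i,j)) = 1\<^sub>m (2^ q)"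
    using assms unfolding strategies_def hermitian_def by auto
  have "\<forall>\<alpha><4^ q. \<forall>\<beta><4^ q. X$$(\<alpha>,\<beta>) = cnj (X$$(\<beta>,\<alpha>))"
  proof (intro allI impI)
    fix \<alpha> \<beta> :: nat assume ab: "\<alpha> < 4^ q" "\<beta> < 4^ q"
    have "adj X $$ (\<alpha>,\<beta>) = cnj (X$$(\<beta>,\<alpha>))" by (rule adj_index[OF c ab])
    then show "X$$(\<alpha>,\<beta>) = cnj (X$$(\<beta>,\<alpha>))" unfolding h .
  qed
  then show ?thesis using p t unfolding nn4 by blast
qed

lemma compact_Kset:
  assumes mb: "matrix_basis (2^ q) E"
  shows "compact (Kset N q E)"
proof -
  obtain B where B: "\<forall>X. psd (2^ q * 2^ q) X \<longrightarrow> (\<forall>\<alpha><2^ q * 2^ q. \<forall>\<beta><2^ q * 2^ q. X$$(\<alpha>,\<beta>) = cnj (X$$(\<beta>,\<alpha>))) \<longrightarrow>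
     mat (2^ q) (2^ q) (\<lambda>(i,j). \<Sum>\<alpha><2^ q * 2^ q. \<Sum>\<beta><2^ q * 2^ q. cnj (X$$(\<alpha>,\<beta>)) * (adj (E \<alpha>) * E \<beta>)$$(i,j)) = 1\<^sub>m (2^ q) \<longrightarrow>
     (\<forall>a<2^ q * 2^ q. \<forall>b<2^ q * 2^ q. \<bar>Re (X$$(a,b))\<bar> \<le> B \<and> \<bar>Im (X$$(a,b))\<bar> \<le> B)"
    using strat_bound[OF mb] by blast
  have SB: "\<bar>Re (X$$(a,b))\<bar> \<le> B \<and> \<bar>Im (X$$(a,b))\<bar> \<le> B"
    if X: "X \<in> strategies q E" and ab: "a < 4^ q" "b < 4^ q" for X a b
    using B[rule_format, of X a b] strat_props[OF X] ab unfolding nn4 by blast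
  define I where "I = Icrd N (4^ q)"
  define Bx where "Bx = Pi\<^sub>E UNIV (\<lambda>c. if c \<in> I then {-B..B} else {0::real})"
  have cB: "compact Bx"
  proof -
    have "compactin (product_topology (\<lambda>_. euclidean) UNIV) Bx" unfolding Bx_def
      by (subst compactin_PiE) (auto simp: compactin_euclidean_iff)
    then show ?thesis by (simp add: euclidean_product_topology compactin_euclidean_iff)
  qed
  have sub: "Kset N q E \<subseteq> Bx"
  proof
    fix x assume x: "x \<in> Kset N q E"
    have "x c \<in> (if c \<in> I then {-B..B} else {0})" for c
    proof (cases "c \<in> I")
      case True
      then obtain k a b t where c: "c = (k,a,b,t)" and k: "k < N" and ab: "a < 4^ q" "b < 4^ q"
        unfolding I_def Icrd_def by auto
      have "dec (4^ q) x k \<in> strategies q E" using x k unfolding Kset_def by auto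
      from SB[OF this ab] have "\<bar>Re (ent x k a b)\<bar> \<le> B \<and> \<bar>Im (ent x k a b)\<bar> \<le> B"
        by (simp add: dec_index ab)
      then show ?thesis using True c by (cases t) auto
    next
      case False
      have "x \<in> SUP_I (Icrd N (4^ q))" using x unfolding Kset_def by auto
      then have "x c = 0" using False unfolding SUP_I_def I_def by blast
      then show ?thesis using False by simp
    qed
    then show "x \<in> Bx" unfolding Bx_def by (auto simp: PiE_iff)
  qed
  have "Kset N q E = Bx \<inter> Kset N q E" using sub by blast
  then show ?thesis using compact_Int_closed[OF cB closed_Kset] by metis
qed

lemma ent_comb: "ent (\<lambda>i. (1-t) * x i + t * y i) k a b =
   complex_of_real (1-t) * ent x k a b + complex_of_real t * ent y k a b"
  unfolding ent_def by (simp add: algebra_simps)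

lemma fmE_comb: "fmE d (\<lambda>i. (1-t) * x i + t * y i) k v =
   complex_of_real (1-t) * fmE d x k v + complex_of_real t * fmE d y k v"
proof -
  have e: "\<And>i j. cnj (v i) * ent (\<lambda>i. (1-t) * x i + t * y i) k i j * v j =
     complex_of_real (1-t) * (cnj (v i) * ent x k i j * v j) + complex_of_real t * (cnj (v i) * ent y k i j * v j)"
    unfolding ent_comb by (simp add: algebra_simps)
  show ?thesis unfolding fmE_def by (simp only: e sum.distrib sum_distrib_left)
qed

lemma tpE_comb: "tpE d E (\<lambda>i. (1-t) * x i + t * y i) k i j =
   complex_of_real (1-t) * tpE d E x k i j + complex_of_real t * tpE d E y k i j"
proof -
  have e: "\<And>\<alpha> \<beta>. cnj (ent (\<lambda>i. (1-t) * x i + t * y i) k \<alpha> \<beta>) * (adj (E \<alpha>) * E \<beta>)$$(i,j) =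
     complex_of_real (1-t) * (cnj (ent x k \<alpha> \<beta>) * (adj (E \<alpha>) * E \<beta>)$$(i,j)) +
     complex_of_real t * (cnj (ent y k \<alpha> \<beta>) * (adj (E \<alpha>) * E \<beta>)$$(i,j))"
    unfolding ent_comb by (simp add: algebra_simps)
  show ?thesis unfolding tpE_def by (simp only: e sum.distrib sum_distrib_left)
qed

lemma cvx_Kset: "cvx (Kset N q E)"
  unfolding cvx_def
proof (intro ballI allI impI)
  fix x y t assume x: "x \<in> Kset N q E" and y: "y \<in> Kset N q E" and t: "0 \<le> t \<and> t \<le> (1::real)"
  define z where "z = (\<lambda>i. (1-t) * x i + t * y i)"
  have zS: "z \<in> SUP_I (Icrd N (4^ q))" using x y unfolding Kset_def SUP_I_def z_def by auto
  have "dec (4^ q) z k \<in> strategies q E" if k: "k < N" for k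
  proof -
    have sx: "dec (4^ q) x k \<in> strategies q E" and sy: "dec (4^ q) y k \<in> strategies q E"
      using x y k unfolding Kset_def by auto
    note X = sx[unfolded strat_char] and Y = sy[unfolded strat_char]
    have H: "\<forall>\<alpha><4^ q. \<forall>\<beta><4^ q. ent z k \<alpha> \<beta> = cnj (ent z k \<beta> \<alpha>)"
    proof (intro allI impI)
      fix \<alpha> \<beta> :: nat assume ab: "\<alpha> < 4^ q" "\<beta> < 4^ q"
      have hx: "ent x k \<alpha> \<beta> = cnj (ent x k \<beta> \<alpha>)" using X ab by blast
      have hy: "ent y k \<alpha> \<beta> = cnj (ent y k \<beta> \<alpha>)" using Y ab by blast
      show "ent z k \<alpha> \<beta> = cnj (ent z k \<beta> \<alpha>)" unfolding z_def ent_comb hx hy by simp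
    qed
    have P: "\<forall>v. Im (fmE (4^ q) z k v) = 0 \<and> 0 \<le> Re (fmE (4^ q) z k v)"
    proof
      fix v
      have px: "Im (fmE (4^ q) x k v) = 0 \<and> 0 \<le> Re (fmE (4^ q) x k v)" using X by blast
      have py: "Im (fmE (4^ q) y k v) = 0 \<and> 0 \<le> Re (fmE (4^ q) y k v)" using Y by blast
      show "Im (fmE (4^ q) z k v) = 0 \<and> 0 \<le> Re (fmE (4^ q) z k v)"
        unfolding z_def fmE_comb using px py t by simp
    qed
    have T: "\<forall>i<2^ q. \<forall>j<2^ q. tpE (4^ q) E z k i j = (if i = j then 1 else 0)"
    proof (intro allI impI)
      fix i j :: nat assume ij: "i < 2^ q" "j < 2^ q"
      have tx: "tpE (4^ q) E x k i j = (if i = j then 1 else 0)" using X ij by blast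
      have ty: "tpE (4^ q) E y k i j = (if i = j then 1 else 0)" using Y ij by blast
      show "tpE (4^ q) E z k i j = (if i = j then 1 else 0)"
        unfolding z_def tpE_comb tx ty by (simp add: algebra_simps)
    qed
    show ?thesis unfolding strat_char using H P T by blast
  qed
  then show "(\<lambda>i. (1-t) * x i + t * y i) \<in> Kset N q E" using zS unfolding Kset_def z_def by auto
qed

lemma id_channel:
  assumes mb: "matrix_basis (2^ q) E"
  shows "\<exists>X. X \<in> strategies q E"
proof -
  define n where "n = (2::nat)^ q"
  define d where "d = (4::nat)^ q"
  have dn: "d = n * n" unfolding n_def d_def nn4 ..
  have carr: "\<And>a. a < d \<Longrightarrow> E a \<in> carrier_mat n n" using mb unfolding matrix_basis_def dn n_def power2_eq_square by auto
  obtain c where c: "1\<^sub>m n = mat n n (\<lambda>(i,j). \<Sum>a<d. c a * E a $$ (i,j))"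
    using mb unfolding matrix_basis_def dn n_def power2_eq_square by force
  have cI: "(\<Sum>a<d. c a * E a $$ (l,i)) = (if l = i then 1 else 0)" if "l < n" "i < n" for l i
  proof -
    have "1\<^sub>m n $$ (l,i) = (mat n n (\<lambda>(i,j). \<Sum>a<d. c a * E a $$ (i,j))) $$ (l,i)" using c by simp
    then show ?thesis using that by simp
  qed
  define X where "X = mat d d (\<lambda>(\<alpha>,\<beta>). c \<alpha> * cnj (c \<beta>))"
  have Xc: "X \<in> carrier_mat d d" unfolding X_def by simp
  have herm: "hermitian X" unfolding hermitian_def
    by (rule eq_matI) (auto simp: X_def adj_def)
  have psd: "psd d X" unfolding psd_def Let_def
  proof (intro conjI allI Xc)
    fix y :: "nat \<Rightarrow> complex"
    define z where "z = (\<Sum>i<d. cnj (y i) * c i)"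
    have "(\<Sum>i<d. \<Sum>j<d. cnj (y i) * X $$ (i,j) * y j) = (\<Sum>i<d. \<Sum>j<d. (cnj (y i) * c i) * (cnj (c j) * y j))"
      unfolding X_def by (intro sum.cong refl) (simp add: algebra_simps)
    also have "\<dots> = z * cnj z" unfolding z_def by (simp add: sum_product algebra_simps)
    also have "\<dots> = complex_of_real ((cmod z)^2)" by (rule complex_norm_square[symmetric])
    finally have e: "(\<Sum>i<d. \<Sum>j<d. cnj (y i) * X $$ (i,j) * y j) = complex_of_real ((cmod z)^2)" .
    show "(\<Sum>i<d. \<Sum>j<d. cnj (y i) * X $$ (i,j) * y j) \<in> \<real>" unfolding e by simp
    show "0 \<le> Re (\<Sum>i<d. \<Sum>j<d. cnj (y i) * X $$ (i,j) * y j)" unfolding e by simp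
  qed
  have tp: "mat n n (\<lambda>(i,j). \<Sum>\<alpha><d. \<Sum>\<beta><d. cnj (X$$(\<alpha>,\<beta>)) * (adj (E \<alpha>) * E \<beta>)$$(i,j)) = 1\<^sub>m n"
  proof (rule eq_matI)
    fix i j assume "i < dim_row (1\<^sub>m n)" "j < dim_col (1\<^sub>m n)"
    then have ij: "i < n" "j < n" by auto
    have "(\<Sum>\<alpha><d. \<Sum>\<beta><d. cnj (X$$(\<alpha>,\<beta>)) * (adj (E \<alpha>) * E \<beta>)$$(i,j)) =
          (\<Sum>\<alpha><d. \<Sum>\<beta><d. \<Sum>l<n. (cnj (c \<alpha>) * cnj (E \<alpha> $$ (l,i))) * (c \<beta> * E \<beta> $$ (l,j)))"
    proof (intro sum.cong refl)
      fix \<alpha> \<beta> assume ab: "\<alpha> \<in> {..<d}" "\<beta> \<in> {..<d}"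
      have ca: "adj (E \<alpha>) \<in> carrier_mat n n" using carr[of \<alpha>] ab unfolding adj_def by auto
      have "(adj (E \<alpha>) * E \<beta>)$$(i,j) = (\<Sum>l<n. cnj (E \<alpha> $$ (l,i)) * E \<beta> $$ (l,j))"
        using mult_index_sum[OF ca carr[of \<beta>] ij] ab adj_index[OF carr[of \<alpha>]] ij by simp
      then show "cnj (X$$(\<alpha>,\<beta>)) * (adj (E \<alpha>) * E \<beta>)$$(i,j) =
          (\<Sum>l<n. (cnj (c \<alpha>) * cnj (E \<alpha> $$ (l,i))) * (c \<beta> * E \<beta> $$ (l,j)))"
        using ab unfolding X_def by (simp add: sum_distrib_left algebra_simps)
    qed
    also have "\<dots> = (\<Sum>l<n. \<Sum>\<alpha><d. \<Sum>\<beta><d. (cnj (c \<alpha>) * cnj (E \<alpha> $$ (l,i))) * (c \<beta> * E \<beta> $$ (l,j)))"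
      by (rule swap3)
    also have "\<dots> = (\<Sum>l<n. cnj (\<Sum>\<alpha><d. c \<alpha> * E \<alpha> $$ (l,i)) * (\<Sum>\<beta><d. c \<beta> * E \<beta> $$ (l,j)))"
      by (simp add: sum_product)
    also have "\<dots> = (\<Sum>l<n. cnj (if l = i then 1 else 0) * (if l = j then 1 else 0))"
      by (intro sum.cong refl) (simp add: cI ij)
    also have "\<dots> = 1\<^sub>m n $$ (i,j)" using ij by (simp add: mif sum.delta cong: if_cong)
    finally show "mat n n (\<lambda>(i,j). \<Sum>\<alpha><d. \<Sum>\<beta><d. cnj (X$$(\<alpha>,\<beta>)) * (adj (E \<alpha>) * E \<beta>)$$(i,j)) $$ (i,j) = 1\<^sub>m n $$ (i,j)"
      using ij by simp
  qed auto
  have "X \<in> strategies q E" unfolding strategies_def using Xc herm psd tp unfolding n_def d_def by auto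
  then show ?thesis by blast
qed

lemma Kset_nonempty:
  assumes mb: "matrix_basis (2^ q) E"
  shows "Kset N q E \<noteq> {}"
proof -
  obtain X where X: "X \<in> strategies q E" using id_channel[OF mb] by blast
  have Xc: "X \<in> carrier_mat (4^ q) (4^ q)" using X unfolding strategies_def by auto
  have "encA N (4^ q) X \<in> Kset N q E" unfolding Kset_def using encA_SUP dec_encA[OF _ Xc] X by auto
  then show ?thesis by blast
qed

definition PP :: "nat \<Rightarrow> nat \<Rightarrow> (nat \<Rightarrow> nat) set" where "PP N d = Pi\<^sub>E {..<N} (\<lambda>_. {..<d})"

definition Uf :: "nat \<Rightarrow> nat \<Rightarrow> (nat \<Rightarrow> (nat \<Rightarrow> nat) \<Rightarrow> (nat \<Rightarrow> nat) \<Rightarrow> complex) \<Rightarrow> nat \<Rightarrow> (crd \<Rightarrow> real) \<Rightarrow> real" where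
  "Uf N d A k x = Re (\<Sum>\<alpha>\<in>PP N d. \<Sum>\<beta>\<in>PP N d. (\<Prod>j<N. ent x j (\<alpha> j) (\<beta> j)) * A k \<alpha> \<beta>)"

definition Rst :: "nat \<Rightarrow> (nat \<Rightarrow> (nat \<Rightarrow> nat) \<Rightarrow> (nat \<Rightarrow> nat) \<Rightarrow> complex) \<Rightarrow> nat \<Rightarrow> (crd \<Rightarrow> real) \<Rightarrow> (nat \<Rightarrow> nat) \<Rightarrow> (nat \<Rightarrow> nat) \<Rightarrow> complex" where
  "Rst N A k x \<alpha> \<beta> = (\<Prod>j\<in>{..<N}-{k}. ent x j (\<alpha> j) (\<beta> j)) * A k \<alpha> \<beta>"

definition Wf :: "nat \<Rightarrow> nat \<Rightarrow> (nat \<Rightarrow> (nat \<Rightarrow> nat) \<Rightarrow> (nat \<Rightarrow> nat) \<Rightarrow> complex) \<Rightarrow> nat \<Rightarrow> (crd \<Rightarrow> real) \<Rightarrow> nat \<Rightarrow> nat \<Rightarrow> complex" where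
  "Wf N d A k x a b = (\<Sum>\<alpha>\<in>PP N d. \<Sum>\<beta>\<in>PP N d. if \<alpha> k = a \<and> \<beta> k = b then Rst N A k x \<alpha> \<beta> else 0)"

definition Gf :: "nat \<Rightarrow> nat \<Rightarrow> (nat \<Rightarrow> (nat \<Rightarrow> nat) \<Rightarrow> (nat \<Rightarrow> nat) \<Rightarrow> complex) \<Rightarrow> (crd \<Rightarrow> real) \<Rightarrow> crd \<Rightarrow> real" where
  "Gf N d A x c = (if snd (snd (snd c)) then Re (Wf N d A (fst c) x (fst (snd c)) (fst (snd (snd c))))
                   else - Im (Wf N d A (fst c) x (fst (snd c)) (fst (snd (snd c)))))"

lemma payoff_Uf:
  assumes "\<forall>j<N. \<forall>a<4^ q. \<forall>b<4^ q. \<chi> j $$ (a,b) = ent x j a b"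
  shows "payoff N q E \<rho> L M pa k \<chi> = Uf N (4^ q) (coeffA N q E \<rho> L M pa) k x"
proof -
  have "(\<Prod>j<N. \<chi> j $$ (\<alpha> j, \<beta> j)) = (\<Prod>j<N. ent x j (\<alpha> j) (\<beta> j))"
    if "\<alpha> \<in> PP N (4^ q)" "\<beta> \<in> PP N (4^ q)" for \<alpha> \<beta>
    using that assms by (intro prod.cong refl) (auto simp: PP_def PiE_iff)
  then show ?thesis unfolding payoff_def Uf_def PP_def[symmetric]
    by (intro arg_cong[where f=Re] sum.cong refl) auto
qed

lemma ent_upd: "ent (upd fst k x y) j a b = (if j = k then ent y j a b else ent x j a b)"
  unfolding ent_def upd_def by simp

lemma dec_upd: "dec d (upd fst k x y) j = (if j = k then dec d y j else dec d x j)"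
  unfolding dec_def ent_upd by simp

lemma pr_Kset: assumes x: "x \<in> Kset N q E" and y: "y \<in> Kset N q E" shows "upd fst k x y \<in> Kset N q E"
proof -
  have "dec (4^ q) (upd fst k x y) j \<in> strategies q E" if j: "j < N" for j
    using x y j unfolding Kset_def dec_upd by auto
  moreover have "upd fst k x y \<in> SUP_I (Icrd N (4^ q))"
    using x y unfolding Kset_def SUP_I_def upd_def by auto
  ultimately show ?thesis unfolding Kset_def by auto
qed

lemma prod_split: assumes "k < N"
  shows "(\<Prod>j<N. ent z j (\<alpha> j) (\<beta> j)) = ent z k (\<alpha> k) (\<beta> k) * (\<Prod>j\<in>{..<N}-{k}. ent z j (\<alpha> j) (\<beta> j))"
  using assms by (subst prod.remove[of "{..<N}" k]) auto

lemma delta2: fixes a0 b0 d :: nat assumes "a0 < d" "b0 < d"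
  shows "(\<Sum>a<d. \<Sum>b<d. if a0 = a \<and> b0 = b then F else (0::complex)) = F"
proof -
  have i: "(\<Sum>b<d. if a0 = a \<and> b0 = b then F else 0) = (if a0 = a then F else 0)" for a
  proof (cases "a0 = a")
    case True
    then have "(\<Sum>b<d. if a0 = a \<and> b0 = b then F else 0) = (\<Sum>b<d. if b0 = b then F else 0)" by simp
    also have "\<dots> = F" using assms(2) by (subst sum.delta') auto
    finally show ?thesis using True by simp
  next
    case False then show ?thesis by simp
  qed
  show ?thesis unfolding i using assms(1) by (subst sum.delta') auto
qed

lemma Uf_lin:
  assumes k: "k < N"
  shows "Uf N d A k (upd fst k x y) - Uf N d A k x = (\<Sum>c\<in>{c\<in>Icrd N d. fst c = k}. Gf N d A x c * (y c - x c))"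
proof -
  define dl where "dl a b = ent y k a b - ent x k a b" for a b
  have L: "Uf N d A k (upd fst k x y) - Uf N d A k x =
      Re (\<Sum>\<alpha>\<in>PP N d. \<Sum>\<beta>\<in>PP N d. dl (\<alpha> k) (\<beta> k) * Rst N A k x \<alpha> \<beta>)"
  proof -
    have u: "(\<Prod>j<N. ent (upd fst k x y) j (\<alpha> j) (\<beta> j)) * A k \<alpha> \<beta> = ent y k (\<alpha> k) (\<beta> k) * Rst N A k x \<alpha> \<beta>" for \<alpha> \<beta>
    proof -
      have "(\<Prod>j\<in>{..<N}-{k}. ent (upd fst k x y) j (\<alpha> j) (\<beta> j)) = (\<Prod>j\<in>{..<N}-{k}. ent x j (\<alpha> j) (\<beta> j))"
        by (intro prod.cong refl) (simp add: ent_upd)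
      then show ?thesis unfolding prod_split[OF k, of "upd fst k x y"] Rst_def by (simp add: ent_upd)
    qed
    have v: "(\<Prod>j<N. ent x j (\<alpha> j) (\<beta> j)) * A k \<alpha> \<beta> = ent x k (\<alpha> k) (\<beta> k) * Rst N A k x \<alpha> \<beta>" for \<alpha> \<beta>
      unfolding prod_split[OF k, of x] Rst_def by simp
    show ?thesis unfolding Uf_def u v dl_def
      by (simp add: sum_subtractf[symmetric] left_diff_distrib)
  qed
  have S: "{c\<in>Icrd N d. fst c = k} = {k} \<times> ({..<d} \<times> ({..<d} \<times> UNIV))" using k by (auto simp: Icrd_def)
  have g: "Gf N d A x (k,a,b,True) * (y (k,a,b,True) - x (k,a,b,True)) + Gf N d A x (k,a,b,False) * (y (k,a,b,False) - x (k,a,b,False))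
      = Re (Wf N d A k x a b * dl a b)" for a b
    unfolding Gf_def dl_def by (simp add: ent_def algebra_simps)
  have "(\<Sum>c\<in>{c\<in>Icrd N d. fst c = k}. Gf N d A x c * (y c - x c)) =
     (\<Sum>a<d. \<Sum>b<d. Gf N d A x (k,a,b,True) * (y (k,a,b,True) - x (k,a,b,True)) + Gf N d A x (k,a,b,False) * (y (k,a,b,False) - x (k,a,b,False)))"
    unfolding S by (simp add: sum.cartesian_product' UNIV_bool add.commute)
  also have "\<dots> = Re (\<Sum>a<d. \<Sum>b<d. Wf N d A k x a b * dl a b)" unfolding g by simp
  also have "(\<Sum>a<d. \<Sum>b<d. Wf N d A k x a b * dl a b) =
      (\<Sum>a<d. \<Sum>b<d. \<Sum>\<alpha>\<in>PP N d. \<Sum>\<beta>\<in>PP N d. if \<alpha> k = a \<and> \<beta> k = b then Rst N A k x \<alpha> \<beta> * dl a b else 0)"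
    unfolding Wf_def sum_distrib_right by (intro sum.cong refl) simp
  also have "\<dots> = (\<Sum>a<d. \<Sum>\<alpha>\<in>PP N d. \<Sum>\<beta>\<in>PP N d. \<Sum>b<d. if \<alpha> k = a \<and> \<beta> k = b then Rst N A k x \<alpha> \<beta> * dl a b else 0)"
    by (rule sum.cong[OF refl], rule swap3[symmetric])
  also have "\<dots> = (\<Sum>\<alpha>\<in>PP N d. \<Sum>\<beta>\<in>PP N d. \<Sum>a<d. \<Sum>b<d. if \<alpha> k = a \<and> \<beta> k = b then Rst N A k x \<alpha> \<beta> * dl a b else 0)"
    by (rule swap3[symmetric])
  also have "\<dots> = (\<Sum>\<alpha>\<in>PP N d. \<Sum>\<beta>\<in>PP N d. dl (\<alpha> k) (\<beta> k) * Rst N A k x \<alpha> \<beta>)"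
  proof (intro sum.cong refl)
    fix \<alpha> \<beta> assume ab: "\<alpha> \<in> PP N d" "\<beta> \<in> PP N d"
    then have "\<alpha> k < d" "\<beta> k < d" using k unfolding PP_def by auto
    have "(\<Sum>a<d. \<Sum>b<d. if \<alpha> k = a \<and> \<beta> k = b then Rst N A k x \<alpha> \<beta> * dl a b else 0)
        = (\<Sum>a<d. \<Sum>b<d. if \<alpha> k = a \<and> \<beta> k = b then Rst N A k x \<alpha> \<beta> * dl (\<alpha> k) (\<beta> k) else 0)"
      by (intro sum.cong refl) auto
    also have "\<dots> = Rst N A k x \<alpha> \<beta> * dl (\<alpha> k) (\<beta> k)" by (rule delta2) fact+
    finally show "(\<Sum>a<d. \<Sum>b<d. if \<alpha> k = a \<and> \<beta> k = b then Rst N A k x \<alpha> \<beta> * dl a b else 0)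
        = dl (\<alpha> k) (\<beta> k) * Rst N A k x \<alpha> \<beta>" by (simp add: mult.commute)
  qed
  finally show ?thesis using L by simp
qed

lemma cont_if_const: "continuous_on S f \<Longrightarrow> continuous_on S (\<lambda>x. if P then f x else 0)"
  by (cases P) auto

lemma cont_Wf: "continuous_on S (\<lambda>x. Wf N d A k x a b)"
  unfolding Wf_def Rst_def by (intro continuous_intros cont_if_const cont_ent)

lemma cont_Gf: "continuous_on S (Gf N d A)"
proof (rule continuous_on_coordinatewise_then_product)
  fix c :: crd
  show "continuous_on S (\<lambda>x. Gf N d A x c)"
    unfolding Gf_def by (cases "snd (snd (snd c))") (simp_all add: cont_Wf continuous_on_Re continuous_on_Im continuous_on_minus)
qed

theorem theorem1:
  fixes N q L :: nat
    and \<rho> :: "complex mat"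
    and M :: "nat \<Rightarrow> complex mat"
    and a :: "nat \<Rightarrow> nat \<Rightarrow> real"
    and E :: "nat \<Rightarrow> complex mat"
  assumes "N \<ge> 1"
    and "density_matrix ((2^ q)^ N) \<rho>"
    and "povm ((2^ q)^ N) L M"
    and "matrix_basis (2^ q) E"
  shows "\<exists>\<chi> :: nat \<Rightarrow> complex mat.
           (\<forall>k<N. \<chi> k \<in> strategies q E) \<and>
           (\<forall>k<N. \<forall>\<chi>' \<in> strategies q E.
              payoff N q E \<rho> L M a k \<chi> \<ge> payoff N q E \<rho> L M a k (\<chi>(k := \<chi>')))"
proof -
  note mb = assms(4)
  define d where "d = (4::nat)^ q"
  define A where "A = coeffA N q E \<rho> L M a"
  define K where "K = Kset N q E"
  have KS: "K \<subseteq> SUP_I (Icrd N d)" unfolding K_def Kset_def d_def by auto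
  have lin: "\<And>k x y. k < N \<Longrightarrow> x \<in> K \<Longrightarrow> y \<in> K \<Longrightarrow>
      Uf N d A k (upd fst k x y) - Uf N d A k x = (\<Sum>c\<in>{c\<in>Icrd N d. fst c = k}. Gf N d A x c * (y c - x c))"
    by (rule Uf_lin)
  obtain x where xK: "x \<in> K" and nash: "\<forall>k<N. \<forall>y\<in>K. Uf N d A k (upd fst k x y) \<le> Uf N d A k x"
    using abstract_nash[OF finite_Icrd compact_Kset[OF mb] Kset_nonempty[OF mb] cvx_Kset KS[unfolded K_def]
        cont_Gf lin[unfolded K_def] pr_Kset] unfolding K_def by blast
  show ?thesis
  proof (intro exI[of _ "dec d x"] conjI allI impI ballI)
    fix k assume k: "k < N"
    show "dec d x k \<in> strategies q E" using xK k unfolding K_def Kset_def d_def by auto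
  next
    fix k \<chi>' assume k: "k < N" and ch: "\<chi>' \<in> strategies q E"
    have chc: "\<chi>' \<in> carrier_mat d d" using ch unfolding strategies_def d_def by auto
    define y where "y = encA N d \<chi>'"
    have yK: "y \<in> K" unfolding K_def Kset_def y_def d_def using encA_SUP dec_encA[OF _ chc[unfolded d_def]] ch by auto
    have p1: "payoff N q E \<rho> L M a k (dec d x) = Uf N d A k x"
      unfolding A_def d_def by (rule payoff_Uf) (simp add: dec_index)
    have p2: "payoff N q E \<rho> L M a k ((dec d x)(k := \<chi>')) = Uf N d A k (upd fst k x y)"
      unfolding A_def d_def
    proof (rule payoff_Uf, intro allI impI)
      fix j aa b :: nat assume j: "j < N" and aa: "aa < 4^ q" and b: "b < 4^ q"
      show "((dec (4^ q) x)(k := \<chi>')) j $$ (aa, b) = ent (upd fst k x y) j aa b"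
        using j aa b by (simp add: ent_upd dec_index y_def ent_encA d_def)
    qed
    show "payoff N q E \<rho> L M a k ((dec d x)(k := \<chi>')) \<le> payoff N q E \<rho> L M a k (dec d x)"
      unfolding p1 p2 using nash k yK by blast
  qed
qed

end
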